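(* (Explicit Rayleigh's Monotonicity Law II.) Let $\Gamma$ be a metrized graph, let $e_i$ be an edge of $\Gamma$ with end points $p_i,q_i$ and length $L_i$, and let $\Gamma'$ be the metrized graph obtained from $\Gamma$ by replacing $e_i$ by an edge $e_i'$ with the same end points and length $L_i'>0$. For $s,t\in\Gamma-e_i$: if $e_i$ is not a bridge, $$r(s,t)=r_{\Gamma'}(s,t)+\frac{L_i-L_i'}{(L_i+R_i)(L_i'+R_i)}\big(j^{\Gamma-e_i}_{p_i}(q_i,s)-j^{\Gamma-e_i}_{p_i}(q_i,t)\big)^2 .$$ If $e_i$ is a bridge, then $r(s,t)=r_{\Gamma'}(s,t)$ when $s,t$ lie in the same connected component of $\Gamma-e_i$, and $r(s,t)=r_{\Gamma'}(s,t)+L_i-L_i'$ otherwise. In particular, if $e_i$ is not a bridge and $L_i>L_i'$, then $r(s,t)\ge r_{\Gamma'}(s,t)$ with equality iff $j^{\Gamma-e_i}_{p_i}(q_i,s)=j^{\Gamma-e_i}_{p_i}(q_i,t)$; if $e_i$ is a bridge and $L_i>L_i'$, then $r(s,t)\ge r_{\Gamma'}(s,t)$ with equality iff $s$ and $t$ are in the same connected component of $\Gamma-e_i$.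
   Context: A metrized graph $\Gamma$ is a finite connected graph (multiple edges and self-loops allowed) in which each edge is identified with a closed line segment of positive length. $\Gamma$ is regarded as a resistive electric circuit in which each edge is a resistor whose resistance equals its length. $r(x,y)$ is the effective resistance; $j_z(x,y)$ is the voltage at $x$ when a unit current enters at $y$ and exits at $z$, with reference voltage $0$ at $z$. $\Gamma-e_i$ is obtained by deleting the interior of $e_i$; $e_i$ is a bridge if $\Gamma-e_i$ is disconnected; for non-bridge $e_i$, $R_i:=r_{\Gamma-e_i}(p_i,q_i)$, and $j^{\Gamma-e_i}$ is the voltage function on $\Gamma-e_i$. *)

theory Defs
  imports Complex_Main
begin

text \<open>A metrized graph is given combinatorially: a finite vertex set, a finite edge set
(multiple edges and self-loops allowed), the ordered pair of end points of each edge and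
a positive length for each edge. Edge e is identified with the segment [0, len e], with
0 corresponding to fst (ends e) and len e to snd (ends e).\<close>

record ('v,'e) mgraph =
  verts :: "'v set"
  edges :: "'e set"
  ends  :: "'e \<Rightarrow> 'v \<times> 'v"
  len   :: "'e \<Rightarrow> real"

text \<open>Points of a metrized graph: vertices, or interior points of edges
(Inner e t is the point at distance t from fst (ends e) along e).\<close>

datatype ('v,'e) pt = Vert 'v | Inner 'e real

definition points :: "('v,'e) mgraph \<Rightarrow> ('v,'e) pt set" where
  "points G = Vert ` verts G \<union> {Inner e t |e t. e \<in> edges G \<and> 0 < t \<and> t < len G e}"

definition edge_pt :: "('v,'e) mgraph \<Rightarrow> 'e \<Rightarrow> real \<Rightarrow> ('v,'e) pt" where
  "edge_pt G e t = (if t = 0 then Vert (fst (ends G e))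
                    else if t = len G e then Vert (snd (ends G e)) else Inner e t)"

definition adj :: "('v,'e) mgraph \<Rightarrow> 'v \<Rightarrow> 'v \<Rightarrow> bool" where
  "adj G u v \<longleftrightarrow> (\<exists>e\<in>edges G. ends G e = (u, v) \<or> ends G e = (v, u))"

definition vconn :: "('v,'e) mgraph \<Rightarrow> 'v \<Rightarrow> 'v \<Rightarrow> bool" where
  "vconn G u v \<longleftrightarrow> (adj G)\<^sup>*\<^sup>* u v"

definition graph_connected :: "('v,'e) mgraph \<Rightarrow> bool" where
  "graph_connected G \<longleftrightarrow> (\<forall>u\<in>verts G. \<forall>v\<in>verts G. vconn G u v)"

definition mgraph_wf :: "('v,'e) mgraph \<Rightarrow> bool" where
  "mgraph_wf G \<longleftrightarrow> finite (verts G) \<and> finite (edges G) \<and> verts G \<noteq> {} \<and>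
     (\<forall>e\<in>edges G. fst (ends G e) \<in> verts G \<and> snd (ends G e) \<in> verts G \<and> len G e > 0) \<and>
     graph_connected G"

text \<open>Vertex representing the position of a point (an interior point of an edge lies in the
same connected component as the first end point of that edge).\<close>

fun rep :: "('v,'e) mgraph \<Rightarrow> ('v,'e) pt \<Rightarrow> 'v" where
  "rep G (Vert v) = v"
| "rep G (Inner e t) = fst (ends G e)"

definition same_component :: "('v,'e) mgraph \<Rightarrow> ('v,'e) pt \<Rightarrow> ('v,'e) pt \<Rightarrow> bool" where
  "same_component G x y \<longleftrightarrow> vconn G (rep G x) (rep G y)"

definition delete_edge :: "('v,'e) mgraph \<Rightarrow> 'e \<Rightarrow> ('v,'e) mgraph" where
  "delete_edge G e = G\<lparr>edges := edges G - {e}\<rparr>"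

definition set_length :: "('v,'e) mgraph \<Rightarrow> 'e \<Rightarrow> real \<Rightarrow> ('v,'e) mgraph" where
  "set_length G e L = G\<lparr>len := (len G)(e := L)\<rparr>"

definition is_bridge :: "('v,'e) mgraph \<Rightarrow> 'e \<Rightarrow> bool" where
  "is_bridge G e \<longleftrightarrow> e \<in> edges G \<and> \<not> graph_connected (delete_edge G e)"

definition dslope :: "(real \<Rightarrow> real) \<Rightarrow> real \<Rightarrow> real \<Rightarrow> real" where
  "dslope g t s = Lim (at_right 0) (\<lambda>h. (g (t + s * h) - g t) / h)"

definition outflow :: "('v,'e) mgraph \<Rightarrow> (('v,'e) pt \<Rightarrow> real) \<Rightarrow> ('v,'e) pt \<Rightarrow> real" where
  "outflow G f p = (case p of
      Vert v \<Rightarrow> (\<Sum>e\<in>{e\<in>edges G. fst (ends G e) = v}. dslope (\<lambda>t. f (edge_pt G e t)) 0 1)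
              + (\<Sum>e\<in>{e\<in>edges G. snd (ends G e) = v}. dslope (\<lambda>t. f (edge_pt G e t)) (len G e) (-1))
    | Inner e t \<Rightarrow> dslope (\<lambda>u. f (edge_pt G e u)) t 1 + dslope (\<lambda>u. f (edge_pt G e u)) t (-1))"

text \<open>f is the voltage function for a unit current entering at y and exiting at z, with
reference voltage 0 at z: f is continuous on each edge, affine on each edge away from y and z,
satisfies Kirchhoff's current law (sum of outgoing slopes = -(delta_y - delta_z)) at every
point, vanishes at z, and is normalised to 0 outside the graph.\<close>

definition is_voltage :: "('v,'e) mgraph \<Rightarrow> ('v,'e) pt \<Rightarrow> ('v,'e) pt \<Rightarrow> (('v,'e) pt \<Rightarrow> real) \<Rightarrow> bool" where
  "is_voltage G y z f \<longleftrightarrow>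
     f z = 0 \<and>
     (\<forall>p. p \<notin> points G \<longrightarrow> f p = 0) \<and>
     (\<forall>e\<in>edges G.
        continuous_on {0..len G e} (\<lambda>t. f (edge_pt G e t)) \<and>
        (\<forall>a b. 0 \<le> a \<and> a < b \<and> b \<le> len G e \<and>
               (\<forall>c. a < c \<and> c < b \<longrightarrow> Inner e c \<noteq> y \<and> Inner e c \<noteq> z) \<longrightarrow>
               (\<exists>\<alpha> \<beta>. \<forall>t\<in>{a..b}. f (edge_pt G e t) = \<alpha> + \<beta> * t))) \<and>
     (\<forall>p\<in>points G. outflow G f p = (if p = y then -1 else 0) + (if p = z then 1 else 0))"

text \<open>j G z x y = j_z(x,y): voltage at x when a unit current enters at y and exits at z,
with reference voltage 0 at z.\<close>

definition jfun :: "('v,'e) mgraph \<Rightarrow> ('v,'e) pt \<Rightarrow> ('v,'e) pt \<Rightarrow> ('v,'e) pt \<Rightarrow> real" where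
  "jfun G z x y = (THE f. is_voltage G y z f) x"

definition resist :: "('v,'e) mgraph \<Rightarrow> ('v,'e) pt \<Rightarrow> ('v,'e) pt \<Rightarrow> real" where
  "resist G x y = jfun G y x x"

end

theory Submission
  imports Defs "Jordan_Normal_Form.Determinant"
begin

lemma la_solve:
  fixes xs :: "'v list" and c :: "'v \<Rightarrow> 'v \<Rightarrow> real"
  assumes dist: "distinct xs"
    and inj: "\<And>x. (\<forall>u\<in>set xs. (\<Sum>w\<in>set xs. c u w * x w) = 0) \<Longrightarrow> (\<forall>u\<in>set xs. x u = 0)"
  shows "\<exists>x. \<forall>u\<in>set xs. (\<Sum>w\<in>set xs. c u w * x w) = b u"
proof -
  define n where "n = length xs"
  define A where "A = mat n n (\<lambda>(i,j). c (xs!i) (xs!j))"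
  have A: "A \<in> carrier_mat n n" unfolding A_def by simp
  have sumre: "(\<Sum>w\<in>set xs. F w) = (\<Sum>j\<in>{0..<n}. F (xs!j))" for F :: "'v \<Rightarrow> real"
  proof -
    have "set xs = (\<lambda>j. xs!j) ` {0..<n}" unfolding n_def by (auto simp: set_conv_nth)
    moreover have "inj_on (\<lambda>j. xs!j) {0..<n}" using dist unfolding n_def
      by (simp add: inj_on_def nth_eq_iff_index_eq)
    ultimately show ?thesis by (simp add: sum.reindex)
  qed
  have Av: "(A *\<^sub>v v) $ i = (\<Sum>j\<in>{0..<n}. c (xs!i) (xs!j) * v $ j)"
    if "i < n" "v \<in> carrier_vec n" for i v
    using that unfolding A_def by (simp add: scalar_prod_def row_def)
  define idx where "idx w = (SOME j. j < n \<and> xs!j = w)" for w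
  have idx: "idx (xs!j) = j" if "j < n" for j
  proof -
    have "\<exists>k. k < n \<and> xs!k = xs!j" using that by blast
    then have "idx (xs!j) < n \<and> xs!(idx (xs!j)) = xs!j" unfolding idx_def by (rule someI_ex)
    then show ?thesis using dist that unfolding n_def using nth_eq_iff_index_eq by blast
  qed
  have "det A \<noteq> 0"
  proof
    assume "det A = 0"
    then obtain v where v: "v \<in> carrier_vec n" "v \<noteq> 0\<^sub>v n" "A *\<^sub>v v = 0\<^sub>v n"
      using det_0_iff_vec_prod_zero[OF A] by blast
    define x where "x w = v $ idx w" for w
    have xv: "x (xs!j) = v $ j" if "j < n" for j using idx[OF that] unfolding x_def by simp
    have "\<forall>u\<in>set xs. (\<Sum>w\<in>set xs. c u w * x w) = 0"
    proof
      fix u assume "u \<in> set xs"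
      then obtain i where i: "i < n" "u = xs!i" unfolding n_def by (auto simp: in_set_conv_nth)
      have "(\<Sum>w\<in>set xs. c u w * x w) = (\<Sum>j\<in>{0..<n}. c (xs!i) (xs!j) * v $ j)"
        unfolding sumre i(2) by (rule sum.cong) (auto simp: xv)
      also have "\<dots> = (A *\<^sub>v v) $ i" using Av[OF i(1) v(1)] by simp
      also have "\<dots> = 0" using v(3) i(1) by simp
      finally show "(\<Sum>w\<in>set xs. c u w * x w) = 0" .
    qed
    then have "\<forall>u\<in>set xs. x u = 0" by (rule inj)
    then have "v = 0\<^sub>v n" using v(1) xv unfolding n_def
      by (intro eq_vecI) (auto simp: n_def)
    with v(2) show False by simp
  qed
  define B where "B = vec n (\<lambda>i. b (xs!i))"
  define X where "X = (1 / det A) \<cdot>\<^sub>v (adj_mat A *\<^sub>v B)"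
  have B: "B \<in> carrier_vec n" unfolding B_def by simp
  have adjA: "adj_mat A \<in> carrier_mat n n" using adj_mat(1)[OF A] .
  have X: "X \<in> carrier_vec n" unfolding X_def using adjA B by simp
  have "A *\<^sub>v X = (1 / det A) \<cdot>\<^sub>v (A *\<^sub>v (adj_mat A *\<^sub>v B))"
    unfolding X_def using A adjA B by (simp add: mult_mat_vec)
  also have "A *\<^sub>v (adj_mat A *\<^sub>v B) = (A * adj_mat A) *\<^sub>v B"
    using A adjA B by (simp add: assoc_mult_mat_vec)
  also have "\<dots> = (det A \<cdot>\<^sub>m 1\<^sub>m n) *\<^sub>v B" using adj_mat(2)[OF A] by simp
  also have "\<dots> = det A \<cdot>\<^sub>v B" using B
    apply (intro eq_vecI)
     apply (auto simp: scalar_prod_def row_def one_mat_def if_distrib[of "\<lambda>f. f _"])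
    apply (subst sum.cong[OF refl, of _ _ "\<lambda>ia. if ia = _ then det A * B$ia else 0"])
     apply auto
    done
  finally have AX: "A *\<^sub>v X = B" using \<open>det A \<noteq> 0\<close> B
    by (auto intro!: eq_vecI)
  define x where "x w = X $ idx w" for w
  have xv: "x (xs!j) = X $ j" if "j < n" for j using idx[OF that] unfolding x_def by simp
  show ?thesis
  proof (intro exI ballI)
    fix u assume "u \<in> set xs"
    then obtain i where i: "i < n" "u = xs!i" unfolding n_def by (auto simp: in_set_conv_nth)
    have "(\<Sum>w\<in>set xs. c u w * x w) = (\<Sum>j\<in>{0..<n}. c (xs!i) (xs!j) * X $ j)"
      unfolding sumre i(2) by (rule sum.cong) (auto simp: xv)
    also have "\<dots> = (A *\<^sub>v X) $ i" using Av[OF i(1) X] by simp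
    also have "\<dots> = b u" using AX i unfolding B_def by simp
    finally show "(\<Sum>w\<in>set xs. c u w * x w) = b u" .
  qed
qed

definition ewf :: "('v,'e) mgraph \<Rightarrow> bool" where
  "ewf G \<longleftrightarrow> finite (verts G) \<and> finite (edges G) \<and>
     (\<forall>e\<in>edges G. fst (ends G e) \<in> verts G \<and> snd (ends G e) \<in> verts G \<and> len G e > 0)"

definition pwa :: "('v,'e) mgraph \<Rightarrow> ('v,'e) pt set \<Rightarrow> (('v,'e) pt \<Rightarrow> real) \<Rightarrow> bool" where
  "pwa G S f \<longleftrightarrow> (\<forall>e\<in>edges G.
        continuous_on {0..len G e} (\<lambda>t. f (edge_pt G e t)) \<and>
        (\<forall>a b. 0 \<le> a \<and> a < b \<and> b \<le> len G e \<and>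
               (\<forall>c. a < c \<and> c < b \<longrightarrow> Inner e c \<notin> S) \<longrightarrow>
               (\<exists>\<alpha> \<beta>. \<forall>t\<in>{a..b}. f (edge_pt G e t) = \<alpha> + \<beta> * t)))"

lemma wf_ewf: "mgraph_wf G \<Longrightarrow> ewf G"
  unfolding mgraph_wf_def ewf_def by auto

lemma ewfD:
  assumes "ewf G" "e \<in> edges G"
  shows "fst (ends G e) \<in> verts G" "snd (ends G e) \<in> verts G" "len G e > 0"
  using assms unfolding ewf_def by auto

lemma ewf_fin: "ewf G \<Longrightarrow> finite (verts G)" "ewf G \<Longrightarrow> finite (edges G)"
  unfolding ewf_def by auto

lemma points_Vert[simp]: "Vert v \<in> points G \<longleftrightarrow> v \<in> verts G"
  unfolding points_def by auto

lemma points_Inner[simp]: "Inner e c \<in> points G \<longleftrightarrow> e \<in> edges G \<and> 0 < c \<and> c < len G e"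
  unfolding points_def by auto

lemma edge_pt_0[simp]: "edge_pt G e 0 = Vert (fst (ends G e))"
  unfolding edge_pt_def by simp

lemma edge_pt_L[simp]: "len G e \<noteq> 0 \<Longrightarrow> edge_pt G e (len G e) = Vert (snd (ends G e))"
  unfolding edge_pt_def by simp

lemma edge_pt_mid: "0 < u \<Longrightarrow> u < len G e \<Longrightarrow> edge_pt G e u = Inner e u"
  unfolding edge_pt_def by simp

lemma edge_pt_points:
  assumes "ewf G" "e \<in> edges G" "0 \<le> u" "u \<le> len G e"
  shows "edge_pt G e u \<in> points G"
  using assms ewfD[OF assms(1,2)] unfolding edge_pt_def by auto

lemma Lim_ev_const: "eventually (\<lambda>h. f h = c) (at_right (0::real)) \<Longrightarrow> Lim (at_right 0) f = c"
  by (rule tendsto_Lim) (simp_all add: tendsto_eventually)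

lemma ev_small: "(\<delta>::real) > 0 \<Longrightarrow> eventually (\<lambda>h. 0 < h \<and> h < \<delta>) (at_right 0)"
  by (subst eventually_at_right[of 0 \<delta>]) auto

lemma dslope_right:
  assumes "\<delta> > 0" "\<And>u. t \<le> u \<Longrightarrow> u \<le> t + \<delta> \<Longrightarrow> g u = \<alpha> + \<beta> * u"
  shows "dslope g t 1 = \<beta>"
  unfolding dslope_def
proof (rule Lim_ev_const)
  show "\<forall>\<^sub>F h in at_right 0. (g (t + 1 * h) - g t) / h = \<beta>"
    using ev_small[OF assms(1)]
  proof eventually_elim
    case (elim h)
    then show ?case using assms(2)[of "t+h"] assms(2)[of t] assms(1) by (simp add: field_simps)
  qed
qed

lemma dslope_left:
  assumes "\<delta> > 0" "\<And>u. t - \<delta> \<le> u \<Longrightarrow> u \<le> t \<Longrightarrow> g u = \<alpha> + \<beta> * u"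
  shows "dslope g t (-1) = - \<beta>"
  unfolding dslope_def
proof (rule Lim_ev_const)
  show "\<forall>\<^sub>F h in at_right 0. (g (t + -1 * h) - g t) / h = - \<beta>"
    using ev_small[OF assms(1)]
  proof eventually_elim
    case (elim h)
    then show ?case using assms(2)[of "t-h"] assms(2)[of t] assms(1) by (simp add: field_simps)
  qed
qed

lemma dslope_cong_right:
  assumes "\<delta> > 0" "\<And>u. t \<le> u \<Longrightarrow> u \<le> t + \<delta> \<Longrightarrow> g u = g' u"
  shows "dslope g t 1 = dslope g' t 1"
  unfolding dslope_def
proof (rule Lim_cong)
  show "\<forall>\<^sub>F h in at_right 0. (g (t + 1 * h) - g t) / h = (g' (t + 1 * h) - g' t) / h"
    using ev_small[OF assms(1)]
  proof eventually_elim
    case (elim h)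
    then show ?case using assms(2)[of "t+h"] assms(2)[of t] assms(1) by simp
  qed
qed simp

lemma dslope_cong_left:
  assumes "\<delta> > 0" "\<And>u. t - \<delta> \<le> u \<Longrightarrow> u \<le> t \<Longrightarrow> g u = g' u"
  shows "dslope g t (-1) = dslope g' t (-1)"
  unfolding dslope_def
proof (rule Lim_cong)
  show "\<forall>\<^sub>F h in at_right 0. (g (t + -1 * h) - g t) / h = (g' (t + -1 * h) - g' t) / h"
    using ev_small[OF assms(1)]
  proof eventually_elim
    case (elim h)
    then show ?case using assms(2)[of "t-h"] assms(2)[of t] assms(1) by simp
  qed
qed simp

lemma finite_Inner_vimage: "finite S \<Longrightarrow> finite (Inner e -` S)"
  by (rule finite_vimageI) (auto simp: inj_on_def)

lemma pwa_right:
  assumes "pwa G S f" "finite S" "e \<in> edges G" "0 \<le> t" "t < len G e"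
  shows "\<exists>\<delta>>0. t + \<delta> \<le> len G e \<and> (\<exists>\<alpha> \<beta>. \<forall>u. t \<le> u \<and> u \<le> t + \<delta> \<longrightarrow> f (edge_pt G e u) = \<alpha> + \<beta> * u)"
proof -
  define C where "C = Inner e -` S"
  have fC: "finite C" unfolding C_def using assms(2) by (rule finite_Inner_vimage)
  define D where "D = insert (len G e - t) ((\<lambda>c. c - t) ` {c\<in>C. t < c})"
  have fD: "finite D" "D \<noteq> {}" unfolding D_def using fC by auto
  define \<delta> where "\<delta> = Min D"
  have pos: "\<delta> > 0" unfolding \<delta>_def using fD assms(5) by (subst Min_gr_iff) (auto simp: D_def)
  have le: "\<delta> \<le> len G e - t" unfolding \<delta>_def using fD by (intro Min_le) (auto simp: D_def)
  have no: "\<forall>c. t < c \<and> c < t + \<delta> \<longrightarrow> Inner e c \<notin> S"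
  proof (intro allI impI)
    fix c assume c: "t < c \<and> c < t + \<delta>"
    show "Inner e c \<notin> S"
    proof
      assume "Inner e c \<in> S"
      then have "c - t \<in> D" unfolding D_def C_def using c by auto
      then have "\<delta> \<le> c - t" unfolding \<delta>_def using fD by (intro Min_le) auto
      with c show False by simp
    qed
  qed
  have "0 \<le> t \<and> t < t + \<delta> \<and> t + \<delta> \<le> len G e \<and> (\<forall>c. t < c \<and> c < t + \<delta> \<longrightarrow> Inner e c \<notin> S)" using assms(4) pos le no by auto
  then obtain \<alpha> \<beta> where "\<forall>u\<in>{t..t+\<delta>}. f (edge_pt G e u) = \<alpha> + \<beta> * u"
    using assms(1,3) unfolding pwa_def by blast
  then show ?thesis using pos le by (intro exI[of _ \<delta>]) auto
qed

lemma pwa_left: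
  assumes "pwa G S f" "finite S" "e \<in> edges G" "0 < t" "t \<le> len G e"
  shows "\<exists>\<delta>>0. 0 \<le> t - \<delta> \<and> (\<exists>\<alpha> \<beta>. \<forall>u. t - \<delta> \<le> u \<and> u \<le> t \<longrightarrow> f (edge_pt G e u) = \<alpha> + \<beta> * u)"
proof -
  define C where "C = Inner e -` S"
  have fC: "finite C" unfolding C_def using assms(2) by (rule finite_Inner_vimage)
  define D where "D = insert t ((\<lambda>c. t - c) ` {c\<in>C. c < t})"
  have fD: "finite D" "D \<noteq> {}" unfolding D_def using fC by auto
  define \<delta> where "\<delta> = Min D"
  have pos: "\<delta> > 0" unfolding \<delta>_def using fD assms(4) by (subst Min_gr_iff) (auto simp: D_def)
  have le: "\<delta> \<le> t" unfolding \<delta>_def using fD by (intro Min_le) (auto simp: D_def)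
  have no: "\<forall>c. t - \<delta> < c \<and> c < t \<longrightarrow> Inner e c \<notin> S"
  proof (intro allI impI)
    fix c assume c: "t - \<delta> < c \<and> c < t"
    show "Inner e c \<notin> S"
    proof
      assume "Inner e c \<in> S"
      then have "t - c \<in> D" unfolding D_def C_def using c by auto
      then have "\<delta> \<le> t - c" unfolding \<delta>_def using fD by (intro Min_le) auto
      with c show False by simp
    qed
  qed
  have "0 \<le> t - \<delta> \<and> t - \<delta> < t \<and> t \<le> len G e \<and> (\<forall>c. t - \<delta> < c \<and> c < t \<longrightarrow> Inner e c \<notin> S)" using assms(5) pos le no by auto
  then obtain \<alpha> \<beta> where "\<forall>u\<in>{t-\<delta>..t}. f (edge_pt G e u) = \<alpha> + \<beta> * u"
    using assms(1,3) unfolding pwa_def by blast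
  then show ?thesis using pos le by (intro exI[of _ \<delta>]) auto
qed

lemma dslope_lin_right:
  assumes "pwa G S f" "pwa G S g" "finite S" "e \<in> edges G" "0 \<le> t" "t < len G e"
  shows "dslope (\<lambda>u. a * f (edge_pt G e u) + b * g (edge_pt G e u) + k) t 1
       = a * dslope (\<lambda>u. f (edge_pt G e u)) t 1 + b * dslope (\<lambda>u. g (edge_pt G e u)) t 1"
proof -
  obtain d1 a1 b1 where 1: "d1 > 0" "\<forall>u. t \<le> u \<and> u \<le> t + d1 \<longrightarrow> f (edge_pt G e u) = a1 + b1 * u"
    using pwa_right[OF assms(1,3-6)] by blast
  obtain d2 a2 b2 where 2: "d2 > 0" "\<forall>u. t \<le> u \<and> u \<le> t + d2 \<longrightarrow> g (edge_pt G e u) = a2 + b2 * u"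
    using pwa_right[OF assms(2,3-6)] by blast
  have "dslope (\<lambda>u. f (edge_pt G e u)) t 1 = b1" using 1 by (intro dslope_right[of d1]) auto
  moreover have "dslope (\<lambda>u. g (edge_pt G e u)) t 1 = b2" using 2 by (intro dslope_right[of d2]) auto
  moreover have "dslope (\<lambda>u. a * f (edge_pt G e u) + b * g (edge_pt G e u) + k) t 1 = a * b1 + b * b2"
    using 1 2 by (intro dslope_right[of "min d1 d2" _ _ "a*a1 + b*a2 + k"]) (auto simp: algebra_simps)
  ultimately show ?thesis by simp
qed

lemma dslope_lin_left:
  assumes "pwa G S f" "pwa G S g" "finite S" "e \<in> edges G" "0 < t" "t \<le> len G e"
  shows "dslope (\<lambda>u. a * f (edge_pt G e u) + b * g (edge_pt G e u) + k) t (-1)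
       = a * dslope (\<lambda>u. f (edge_pt G e u)) t (-1) + b * dslope (\<lambda>u. g (edge_pt G e u)) t (-1)"
proof -
  obtain d1 a1 b1 where 1: "d1 > 0" "\<forall>u. t - d1 \<le> u \<and> u \<le> t \<longrightarrow> f (edge_pt G e u) = a1 + b1 * u"
    using pwa_left[OF assms(1,3-6)] by blast
  obtain d2 a2 b2 where 2: "d2 > 0" "\<forall>u. t - d2 \<le> u \<and> u \<le> t \<longrightarrow> g (edge_pt G e u) = a2 + b2 * u"
    using pwa_left[OF assms(2,3-6)] by blast
  have "dslope (\<lambda>u. f (edge_pt G e u)) t (-1) = - b1" using 1 by (intro dslope_left[of d1]) auto
  moreover have "dslope (\<lambda>u. g (edge_pt G e u)) t (-1) = - b2" using 2 by (intro dslope_left[of d2]) auto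
  moreover have "dslope (\<lambda>u. a * f (edge_pt G e u) + b * g (edge_pt G e u) + k) t (-1) = - (a * b1 + b * b2)"
    using 1 2 by (intro dslope_left[of "min d1 d2" _ _ "a*a1 + b*a2 + k"]) (auto simp: algebra_simps)
  ultimately show ?thesis by simp
qed

lemma pwa_lin:
  assumes "pwa G S f" "pwa G S g"
  shows "pwa G S (\<lambda>x. a * f x + b * g x + k)"
  unfolding pwa_def
proof (intro ballI conjI allI impI)
  fix e assume e: "e \<in> edges G"
  show "continuous_on {0..len G e} (\<lambda>t. a * f (edge_pt G e t) + b * g (edge_pt G e t) + k)"
    using assms e unfolding pwa_def by (intro continuous_intros) auto
  fix a' b' assume ab: "0 \<le> a' \<and> a' < b' \<and> b' \<le> len G e \<and> (\<forall>c. a' < c \<and> c < b' \<longrightarrow> Inner e c \<notin> S)"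
  obtain a1 b1 where 1: "\<forall>t\<in>{a'..b'}. f (edge_pt G e t) = a1 + b1 * t"
    using assms(1) e ab unfolding pwa_def by blast
  obtain a2 b2 where 2: "\<forall>t\<in>{a'..b'}. g (edge_pt G e t) = a2 + b2 * t"
    using assms(2) e ab unfolding pwa_def by blast
  show "\<exists>\<alpha> \<beta>. \<forall>t\<in>{a'..b'}. a * f (edge_pt G e t) + b * g (edge_pt G e t) + k = \<alpha> + \<beta> * t"
    using 1 2 by (intro exI[of _ "a*a1+b*a2+k"] exI[of _ "a*b1+b*b2"]) (auto simp: algebra_simps)
qed

lemma pwa_mono:
  assumes "pwa G S f" "\<And>e c. Inner e c \<in> S \<Longrightarrow> Inner e c \<in> S'"
  shows "pwa G S' f"
  unfolding pwa_def
proof (intro ballI conjI allI impI)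
  fix e assume e: "e \<in> edges G"
  show "continuous_on {0..len G e} (\<lambda>t. f (edge_pt G e t))" using assms(1) e unfolding pwa_def by blast
  fix a b assume ab: "0 \<le> a \<and> a < b \<and> b \<le> len G e \<and> (\<forall>c. a < c \<and> c < b \<longrightarrow> Inner e c \<notin> S')"
  then have "0 \<le> a \<and> a < b \<and> b \<le> len G e \<and> (\<forall>c. a < c \<and> c < b \<longrightarrow> Inner e c \<notin> S)"
    using assms(2) by blast
  then show "\<exists>\<alpha> \<beta>. \<forall>t\<in>{a..b}. f (edge_pt G e t) = \<alpha> + \<beta> * t" using assms(1) e unfolding pwa_def by blast
qed

lemma pwa_cong:
  assumes "ewf G" "\<And>p. p \<in> points G \<Longrightarrow> f p = g p" "pwa G S f"
  shows "pwa G S g"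
  unfolding pwa_def
proof (intro ballI conjI allI impI)
  fix e assume e: "e \<in> edges G"
  have eq: "f (edge_pt G e t) = g (edge_pt G e t)" if "t \<in> {0..len G e}" for t
    using assms(2) edge_pt_points[OF assms(1) e] that by auto
  have "continuous_on {0..len G e} (\<lambda>t. f (edge_pt G e t))"
    using assms(3) e unfolding pwa_def by blast
  then show "continuous_on {0..len G e} (\<lambda>t. g (edge_pt G e t))"
    using continuous_on_cong[OF refl eq, of "{0..len G e}"] by simp
  fix a b assume ab: "0 \<le> a \<and> a < b \<and> b \<le> len G e \<and> (\<forall>c. a < c \<and> c < b \<longrightarrow> Inner e c \<notin> S)"
  obtain \<alpha> \<beta> where 1: "\<forall>t\<in>{a..b}. f (edge_pt G e t) = \<alpha> + \<beta> * t"
    using assms(3) e ab unfolding pwa_def by blast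
  show "\<exists>\<alpha> \<beta>. \<forall>t\<in>{a..b}. g (edge_pt G e t) = \<alpha> + \<beta> * t"
  proof (rule exI[of _ \<alpha>], rule exI[of _ \<beta>], rule ballI)
    fix t assume t: "t \<in> {a..b}"
    then have "t \<in> {0..len G e}" using ab by auto
    then show "g (edge_pt G e t) = \<alpha> + \<beta> * t" using eq[of t] 1 t by simp
  qed
qed

lemma outflow_lin:
  assumes "ewf G" "pwa G S f" "pwa G S g" "finite S" "p \<in> points G"
  shows "outflow G (\<lambda>x. a * f x + b * g x + k) p = a * outflow G f p + b * outflow G g p"
proof (cases p)
  case (Vert v)
  have A: "(\<Sum>e\<in>{e\<in>edges G. fst (ends G e) = v}. dslope (\<lambda>u. a * f (edge_pt G e u) + b * g (edge_pt G e u) + k) 0 1)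
     = (\<Sum>e\<in>{e\<in>edges G. fst (ends G e) = v}. a * dslope (\<lambda>u. f (edge_pt G e u)) 0 1 + b * dslope (\<lambda>u. g (edge_pt G e u)) 0 1)"
    by (rule sum.cong[OF refl], rule dslope_lin_right[OF assms(2-4)]) (auto dest: ewfD[OF assms(1)])
  have B: "(\<Sum>e\<in>{e\<in>edges G. snd (ends G e) = v}. dslope (\<lambda>u. a * f (edge_pt G e u) + b * g (edge_pt G e u) + k) (len G e) (-1))
     = (\<Sum>e\<in>{e\<in>edges G. snd (ends G e) = v}. a * dslope (\<lambda>u. f (edge_pt G e u)) (len G e) (-1) + b * dslope (\<lambda>u. g (edge_pt G e u)) (len G e) (-1))"
    by (rule sum.cong[OF refl], rule dslope_lin_left[OF assms(2-4)]) (auto dest: ewfD[OF assms(1)])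
  have A2: "(\<Sum>e\<in>{e\<in>edges G. fst (ends G e) = v}. a * dslope (\<lambda>u. f (edge_pt G e u)) 0 1 + b * dslope (\<lambda>u. g (edge_pt G e u)) 0 1)
    = a * (\<Sum>e\<in>{e\<in>edges G. fst (ends G e) = v}. dslope (\<lambda>u. f (edge_pt G e u)) 0 1) + b * (\<Sum>e\<in>{e\<in>edges G. fst (ends G e) = v}. dslope (\<lambda>u. g (edge_pt G e u)) 0 1)"
    by (simp only: sum.distrib sum_distrib_left)
  have B2: "(\<Sum>e\<in>{e\<in>edges G. snd (ends G e) = v}. a * dslope (\<lambda>u. f (edge_pt G e u)) (len G e) (-1) + b * dslope (\<lambda>u. g (edge_pt G e u)) (len G e) (-1))
    = a * (\<Sum>e\<in>{e\<in>edges G. snd (ends G e) = v}. dslope (\<lambda>u. f (edge_pt G e u)) (len G e) (-1)) + b * (\<Sum>e\<in>{e\<in>edges G. snd (ends G e) = v}. dslope (\<lambda>u. g (edge_pt G e u)) (len G e) (-1))"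
    by (simp only: sum.distrib sum_distrib_left)
  show ?thesis unfolding Vert outflow_def pt.case A B A2 B2
    by (simp only: algebra_simps)
next
  case (Inner e t)
  with assms(5) have e: "e \<in> edges G" "0 < t" "t < len G e" by auto
  show ?thesis unfolding Inner outflow_def
    using dslope_lin_right[OF assms(2-4) e(1), of t] dslope_lin_left[OF assms(2-4) e(1), of t] e
    by (simp add: algebra_simps)
qed

lemma outflow_cong:
  assumes "ewf G" "\<And>p. p \<in> points G \<Longrightarrow> f p = g p" "p \<in> points G"
  shows "outflow G f p = outflow G g p"
proof -
  have eq: "f (edge_pt G e t) = g (edge_pt G e t)" if "e \<in> edges G" "0 \<le> t" "t \<le> len G e" for e t
    using assms(2) edge_pt_points[OF assms(1) that] by auto
  show ?thesis
  proof (cases p)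
    case (Vert v)
    have A: "dslope (\<lambda>u. f (edge_pt G e u)) 0 1 = dslope (\<lambda>u. g (edge_pt G e u)) 0 1" if "e \<in> edges G" for e
      using ewfD[OF assms(1) that] by (intro dslope_cong_right[of "len G e"]) (auto intro: eq[OF that])
    have B: "dslope (\<lambda>u. f (edge_pt G e u)) (len G e) (-1) = dslope (\<lambda>u. g (edge_pt G e u)) (len G e) (-1)"
      if "e \<in> edges G" for e
      using ewfD[OF assms(1) that] by (intro dslope_cong_left[of "len G e"]) (auto intro: eq[OF that])
    show ?thesis unfolding Vert outflow_def using A B by simp
  next
    case (Inner e t)
    with assms(3) have e: "e \<in> edges G" "0 < t" "t < len G e" by auto
    have A: "dslope (\<lambda>u. f (edge_pt G e u)) t 1 = dslope (\<lambda>u. g (edge_pt G e u)) t 1"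
      using e by (intro dslope_cong_right[of "len G e - t"]) (auto intro: eq)
    have B: "dslope (\<lambda>u. f (edge_pt G e u)) t (-1) = dslope (\<lambda>u. g (edge_pt G e u)) t (-1)"
      using e by (intro dslope_cong_left[of t]) (auto intro: eq)
    show ?thesis unfolding Inner outflow_def using A B by simp
  qed
qed

definition lin :: "('v,'e) mgraph \<Rightarrow> ('v \<Rightarrow> real) \<Rightarrow> ('v,'e) pt \<Rightarrow> real" where
  "lin G x p = (case p of Vert v \<Rightarrow> x v
     | Inner e t \<Rightarrow> x (fst (ends G e)) + (x (snd (ends G e)) - x (fst (ends G e))) * t / len G e)"

definition Lap :: "('v,'e) mgraph \<Rightarrow> ('v \<Rightarrow> real) \<Rightarrow> 'v \<Rightarrow> real" where
  "Lap G x v = (\<Sum>e\<in>{e\<in>edges G. fst (ends G e) = v}. (x (snd (ends G e)) - x v) / len G e)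
             + (\<Sum>e\<in>{e\<in>edges G. snd (ends G e) = v}. (x (fst (ends G e)) - x v) / len G e)"

lemma lin_Vert[simp]: "lin G x (Vert v) = x v"
  unfolding lin_def by simp

lemma lin_edge:
  assumes "len G e > 0" "0 \<le> t" "t \<le> len G e"
  shows "lin G x (edge_pt G e t) = x (fst (ends G e)) + (x (snd (ends G e)) - x (fst (ends G e))) * t / len G e"
  using assms unfolding edge_pt_def lin_def by auto

lemma affine_pwa_edge:
  assumes "\<And>t. 0 \<le> t \<Longrightarrow> t \<le> len G e \<Longrightarrow> f (edge_pt G e t) = \<alpha> + \<beta> * t"
  shows "continuous_on {0..len G e} (\<lambda>t. f (edge_pt G e t))"
    "\<And>a b. 0 \<le> a \<Longrightarrow> b \<le> len G e \<Longrightarrow> \<exists>\<alpha> \<beta>. \<forall>t\<in>{a..b}. f (edge_pt G e t) = \<alpha> + \<beta> * t"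
proof -
  have "continuous_on {0..len G e} (\<lambda>t. \<alpha> + \<beta> * t)" by (intro continuous_intros)
  then show "continuous_on {0..len G e} (\<lambda>t. f (edge_pt G e t))"
    using continuous_on_cong[OF refl, of "{0..len G e}" "\<lambda>t. f (edge_pt G e t)" "\<lambda>t. \<alpha> + \<beta> * t"] assms
    by simp
  fix a b :: real assume "0 \<le> a" "b \<le> len G e"
  then show "\<exists>\<alpha> \<beta>. \<forall>t\<in>{a..b}. f (edge_pt G e t) = \<alpha> + \<beta> * t"
    using assms by (rule_tac exI[of _ \<alpha>], rule_tac exI[of _ \<beta>]) auto
qed

lemma lin_pwa:
  assumes "ewf G"
  shows "pwa G S (lin G x)"
  unfolding pwa_def
proof (intro ballI conjI allI impI)
  fix e assume e: "e \<in> edges G"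
  have L: "len G e > 0" using ewfD[OF assms e] by simp
  have aff: "lin G x (edge_pt G e t) = x (fst (ends G e)) + ((x (snd (ends G e)) - x (fst (ends G e))) / len G e) * t"
    if "0 \<le> t" "t \<le> len G e" for t
    using lin_edge[OF L that] by simp
  show "continuous_on {0..len G e} (\<lambda>t. lin G x (edge_pt G e t))"
    by (rule affine_pwa_edge(1)[OF aff])
  fix a b assume "0 \<le> a \<and> a < b \<and> b \<le> len G e \<and> (\<forall>c. a < c \<and> c < b \<longrightarrow> Inner e c \<notin> S)"
  then show "\<exists>\<alpha> \<beta>. \<forall>t\<in>{a..b}. lin G x (edge_pt G e t) = \<alpha> + \<beta> * t"
    using affine_pwa_edge(2)[OF aff] by blast
qed

lemma outflow_vert_affine:
  assumes "ewf G" "v \<in> verts G"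
    and aff: "\<And>e t. e \<in> edges G \<Longrightarrow> 0 \<le> t \<Longrightarrow> t \<le> len G e \<Longrightarrow>
       f (edge_pt G e t) = f (Vert (fst (ends G e))) + (f (Vert (snd (ends G e))) - f (Vert (fst (ends G e)))) * t / len G e"
  shows "outflow G f (Vert v) = Lap G (\<lambda>w. f (Vert w)) v"
proof -
  have A: "dslope (\<lambda>u. f (edge_pt G e u)) 0 1 = (f (Vert (snd (ends G e))) - f (Vert (fst (ends G e)))) / len G e"
    if "e \<in> edges G" for e
    using ewfD[OF assms(1) that] aff[OF that]
    by (intro dslope_right[of "len G e" _ _ "f (Vert (fst (ends G e)))"]) (auto simp: field_simps)
  have B: "dslope (\<lambda>u. f (edge_pt G e u)) (len G e) (-1) = (f (Vert (fst (ends G e))) - f (Vert (snd (ends G e)))) / len G e"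
    if "e \<in> edges G" for e
  proof -
    have "dslope (\<lambda>u. f (edge_pt G e u)) (len G e) (-1) = - ((f (Vert (snd (ends G e))) - f (Vert (fst (ends G e)))) / len G e)"
      using ewfD[OF assms(1) that] aff[OF that]
      by (intro dslope_left[of "len G e" _ _ "f (Vert (fst (ends G e)))"]) (auto simp: field_simps)
    then show ?thesis by (simp add: minus_divide_left)
  qed
  show ?thesis unfolding outflow_def Lap_def pt.case
    by (intro arg_cong2[where f="(+)"] sum.cong refl) (auto simp: A B)
qed

lemma outflow_inner_affine:
  assumes "e \<in> edges G" "0 < u" "u < len G e" "\<delta> > 0"
    "\<And>t. u - \<delta> \<le> t \<Longrightarrow> t \<le> u + \<delta> \<Longrightarrow> f (edge_pt G e t) = \<alpha> + \<beta> * t"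
  shows "outflow G f (Inner e u) = 0"
proof -
  have "dslope (\<lambda>t. f (edge_pt G e t)) u 1 = \<beta>"
    using assms(4,5) by (intro dslope_right[of \<delta> _ _ \<alpha>]) auto
  moreover have "dslope (\<lambda>t. f (edge_pt G e t)) u (-1) = - \<beta>"
    using assms(4,5) by (intro dslope_left[of \<delta> _ _ \<alpha>]) auto
  ultimately show ?thesis unfolding outflow_def by simp
qed

lemma lin_outflow:
  assumes "ewf G" "p \<in> points G"
  shows "outflow G (lin G x) p = (case p of Vert v \<Rightarrow> Lap G x v | Inner e t \<Rightarrow> 0)"
proof (cases p)
  case (Vert v)
  have "outflow G (lin G x) (Vert v) = Lap G (\<lambda>w. lin G x (Vert w)) v"
    using assms Vert by (intro outflow_vert_affine) (auto simp: lin_edge ewfD)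
  then show ?thesis using Vert by (simp add: lin_def)
next
  case (Inner e u)
  with assms have e: "e \<in> edges G" "0 < u" "u < len G e" by auto
  have "outflow G (lin G x) (Inner e u) = 0"
    using e by (intro outflow_inner_affine[of e G u "min u (len G e - u)" _ "x (fst (ends G e))"
          "(x (snd (ends G e)) - x (fst (ends G e))) / len G e"]) (auto simp: lin_edge)
  then show ?thesis using Inner by simp
qed

definition tent :: "('v,'e) mgraph \<Rightarrow> 'e \<Rightarrow> real \<Rightarrow> ('v,'e) pt \<Rightarrow> real" where
  "tent G e c p = (case p of Vert v \<Rightarrow> 0 | Inner e' u \<Rightarrow>
     if e' = e \<and> 0 < u \<and> u < len G e then
       (if u \<le> c then u * (len G e - c) / len G e else c * (len G e - u) / len G e) else 0)"

definition tf :: "real \<Rightarrow> real \<Rightarrow> real \<Rightarrow> real" where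
  "tf L c u = (if u \<le> c then u * (L - c) / L else c * (L - u) / L)"

lemma tent_same:
  "0 < c \<Longrightarrow> c < len G e \<Longrightarrow> 0 \<le> u \<Longrightarrow> u \<le> len G e \<Longrightarrow> tent G e c (edge_pt G e u) = tf (len G e) c u"
  unfolding tent_def edge_pt_def tf_def by auto

lemma tent_other: "e' \<noteq> e \<Longrightarrow> tent G e c (edge_pt G e' u) = 0"
  unfolding tent_def edge_pt_def by auto

lemma tent_Vert[simp]: "tent G e c (Vert v) = 0"
  unfolding tent_def by simp

lemma tf_left: "u \<le> c \<Longrightarrow> tf L c u = 0 + ((L - c) / L) * u"
  unfolding tf_def by simp

lemma tf_right: "L \<noteq> 0 \<Longrightarrow> c \<le> u \<Longrightarrow> tf L c u = c + (- c / L) * u"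
  unfolding tf_def by (auto simp: field_simps)

lemma tf_min: "L > 0 \<Longrightarrow> c < L \<Longrightarrow> 0 < c \<Longrightarrow> tf L c u = min (u * (L - c) / L) (c * (L - u) / L)"
proof -
  assume L: "L > 0" "c < L" "0 < c"
  have "u \<le> c \<longleftrightarrow> u * (L - c) / L \<le> c * (L - u) / L"
    using L by (simp add: divide_right_mono_neg field_simps)
  then show ?thesis unfolding tf_def min_def by auto
qed

lemma pwa_zero: "pwa G S (\<lambda>_. 0)"
  unfolding pwa_def by (auto intro!: exI[of _ 0])

lemma dslope_const: "dslope (\<lambda>_. k) t s = 0"
  unfolding dslope_def by (rule Lim_ev_const) simp

lemma outflow_zero: "outflow G (\<lambda>_. 0) p = 0"
  unfolding outflow_def by (simp add: dslope_const split: pt.split)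

lemma tent_pwa:
  assumes "ewf G" "e \<in> edges G" "0 < c" "c < len G e"
  shows "pwa G {Inner e c} (tent G e c)"
  unfolding pwa_def
proof (intro ballI conjI allI impI)
  fix e' assume e': "e' \<in> edges G"
  have L: "len G e > 0" using assms(3,4) by simp
  show "continuous_on {0..len G e'} (\<lambda>t. tent G e c (edge_pt G e' t))"
  proof (cases "e' = e")
    case True
    have "continuous_on {0..len G e} (\<lambda>t. min (t * (len G e - c) / len G e) (c * (len G e - t) / len G e))"
      using L by (intro continuous_intros) auto
    then show ?thesis using True tent_same[OF assms(3,4)] tf_min[OF L assms(4,3)]
      using continuous_on_cong[OF refl, of "{0..len G e}" "\<lambda>t. tent G e c (edge_pt G e t)"
          "\<lambda>t. min (t * (len G e - c) / len G e) (c * (len G e - t) / len G e)"] by simp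
  next
    case False
    then show ?thesis by (simp add: tent_other)
  qed
  fix a b assume ab: "0 \<le> a \<and> a < b \<and> b \<le> len G e' \<and> (\<forall>c'. a < c' \<and> c' < b \<longrightarrow> Inner e' c' \<notin> {Inner e c})"
  show "\<exists>\<alpha> \<beta>. \<forall>t\<in>{a..b}. tent G e c (edge_pt G e' t) = \<alpha> + \<beta> * t"
  proof (cases "e' = e")
    case True
    then have "b \<le> c \<or> c \<le> a" using ab by force
    then show ?thesis
    proof
      assume "b \<le> c"
      then show ?thesis using True ab tent_same[OF assms(3,4)] tf_left
        by (rule_tac exI[of _ 0], rule_tac exI[of _ "(len G e - c) / len G e"]) auto
    next
      assume "c \<le> a"
      then show ?thesis using True ab tent_same[OF assms(3,4)] tf_right[of "len G e"] L
        by (rule_tac exI[of _ c], rule_tac exI[of _ "- c / len G e"]) auto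
    qed
  next
    case False
    then show ?thesis by (simp add: tent_other, rule_tac x=0 in exI, rule_tac x=0 in exI, simp)
  qed
qed

definition bsrc :: "('v,'e) mgraph \<Rightarrow> ('v,'e) pt \<Rightarrow> 'v \<Rightarrow> real" where
  "bsrc G y v = (case y of Vert w \<Rightarrow> (if w = v then 1 else 0)
     | Inner e c \<Rightarrow> (if fst (ends G e) = v then (len G e - c) / len G e else 0)
                  + (if snd (ends G e) = v then c / len G e else 0))"

definition ttent :: "('v,'e) mgraph \<Rightarrow> ('v,'e) pt \<Rightarrow> ('v,'e) pt \<Rightarrow> real" where
  "ttent G y = (case y of Vert w \<Rightarrow> (\<lambda>_. 0) | Inner e c \<Rightarrow> tent G e c)"

definition isInner :: "('v,'e) pt \<Rightarrow> bool" where
  "isInner y = (case y of Vert w \<Rightarrow> False | Inner e c \<Rightarrow> True)"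

lemma ttent_Vert[simp]: "ttent G y (Vert v) = 0"
  unfolding ttent_def by (simp split: pt.split)

lemma tent_outflow_vert:
  assumes "ewf G" "e \<in> edges G" "0 < c" "c < len G e" "v \<in> verts G"
  shows "outflow G (tent G e c) (Vert v) = bsrc G (Inner e c) v"
proof -
  have L: "len G e > 0" using assms(3,4) by simp
  have A: "dslope (\<lambda>u. tent G e c (edge_pt G e' u)) 0 1 = (if e' = e then (len G e - c) / len G e else 0)"
    if "e' \<in> edges G" for e'
  proof (cases "e' = e")
    case True
    then show ?thesis using assms(3,4) tent_same[OF assms(3,4)] tf_left
      by (simp, intro dslope_right[of c _ _ 0]) auto
  next
    case False
    then show ?thesis by (simp add: tent_other dslope_const)
  qed
  have B: "dslope (\<lambda>u. tent G e c (edge_pt G e' u)) (len G e') (-1) = (if e' = e then c / len G e else 0)"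
    if "e' \<in> edges G" for e'
  proof (cases "e' = e")
    case True
    have "dslope (\<lambda>u. tent G e c (edge_pt G e u)) (len G e) (-1) = - (- c / len G e)"
      using assms(3,4) tent_same[OF assms(3,4)] tf_right[of "len G e"] L
      by (intro dslope_left[of "len G e - c" _ _ c]) auto
    then show ?thesis using True by simp
  next
    case False
    then show ?thesis by (simp add: tent_other dslope_const)
  qed
  have "outflow G (tent G e c) (Vert v)
     = (\<Sum>e'\<in>{e'\<in>edges G. fst (ends G e') = v}. if e' = e then (len G e - c) / len G e else 0)
     + (\<Sum>e'\<in>{e'\<in>edges G. snd (ends G e') = v}. if e' = e then c / len G e else 0)"
    unfolding outflow_def pt.case
    by (intro arg_cong2[where f="(+)"] sum.cong refl) (auto simp: A B)
  also have "\<dots> = bsrc G (Inner e c) v"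
    using assms(1,2) unfolding bsrc_def by (simp add: sum.delta ewf_fin)
  finally show ?thesis .
qed

lemma tent_outflow_inner:
  assumes "ewf G" "e \<in> edges G" "0 < c" "c < len G e" "Inner e' u \<in> points G"
  shows "outflow G (tent G e c) (Inner e' u) = (if Inner e' u = Inner e c then -1 else 0)"
proof -
  have L: "len G e > 0" using assms(3,4) by simp
  have u: "e' \<in> edges G" "0 < u" "u < len G e'" using assms(5) by auto
  consider "e' \<noteq> e" | "e' = e" "u < c" | "e' = e" "u = c" | "e' = e" "c < u" by linarith
  then show ?thesis
  proof cases
    case 1
    then show ?thesis using u
      by (simp, intro outflow_inner_affine[of e' G u "min u (len G e' - u)" _ 0 0]) (auto simp: tent_other)
  next
    case 2
    have "tent G e c (edge_pt G e t) = 0 + ((len G e - c) / len G e) * t"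
      if "u - min u (c - u) \<le> t" "t \<le> u + min u (c - u)" for t
    proof -
      have "0 \<le> t" "t \<le> c" "t \<le> len G e" using that 2 u assms(4) by (auto simp: min_def split: if_splits)
      then show ?thesis using tent_same[OF assms(3,4)] tf_left[of t c] assms(3) by simp
    qed
    then show ?thesis using 2 u
      by (simp, intro outflow_inner_affine[of e G u "min u (c - u)" _ 0 "(len G e - c) / len G e"]) auto
  next
    case 4
    have "tent G e c (edge_pt G e t) = c + (- c / len G e) * t"
      if "u - min (u - c) (len G e - u) \<le> t" "t \<le> u + min (u - c) (len G e - u)" for t
    proof -
      have "0 \<le> t" "c \<le> t" "t \<le> len G e" using that 4 u assms(3) by (auto simp: min_def split: if_splits)
      then show ?thesis using tent_same[OF assms(3,4)] tf_right[of "len G e" c t] L by simp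
    qed
    then show ?thesis using 4 u
      by (simp, intro outflow_inner_affine[of e G u "min (u - c) (len G e - u)" _ c "- c / len G e"]) auto
  next
    case 3
    have R: "dslope (\<lambda>t. tent G e c (edge_pt G e t)) c 1 = - c / len G e"
      using assms(3,4) tent_same[OF assms(3,4)] tf_right[of "len G e"] L
      by (intro dslope_right[of "len G e - c" _ _ c]) auto
    have Lf: "dslope (\<lambda>t. tent G e c (edge_pt G e t)) c (-1) = - ((len G e - c) / len G e)"
      using assms(3,4) tent_same[OF assms(3,4)] tf_left
      by (intro dslope_left[of c _ _ 0]) auto
    have "- c / len G e + - ((len G e - c) / len G e) = -1" using L by (simp add: field_simps)
    then show ?thesis using 3 R Lf unfolding outflow_def by simp
  qed
qed

lemma ttent_pwa:
  assumes "ewf G" "y \<in> points G"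
  shows "pwa G {y} (ttent G y)"
proof (cases y)
  case (Vert w)
  then show ?thesis unfolding ttent_def by (simp add: pwa_zero)
next
  case (Inner e c)
  then show ?thesis using assms tent_pwa[of G e c] unfolding ttent_def by simp
qed

lemma ttent_outflow:
  assumes "ewf G" "y \<in> points G" "p \<in> points G"
  shows "outflow G (ttent G y) p = (case p of Vert v \<Rightarrow> (if isInner y then bsrc G y v else 0)
                                           | Inner e u \<Rightarrow> (if p = y then -1 else 0))"
proof (cases y)
  case (Vert w)
  then show ?thesis unfolding ttent_def isInner_def using outflow_zero
    by (auto split: pt.split simp: outflow_zero)
next
  case (Inner e c)
  then have ec: "e \<in> edges G" "0 < c" "c < len G e" using assms(2) by auto
  show ?thesis
  proof (cases p)
    case (Vert v)
    then show ?thesis using Inner tent_outflow_vert[OF assms(1) ec] assms(3)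
      unfolding ttent_def isInner_def by simp
  next
    case (Inner e' u)
    then show ?thesis using \<open>y = Inner e c\<close> tent_outflow_inner[OF assms(1) ec] assms(3)
      unfolding ttent_def isInner_def by simp
  qed
qed

lemma bsrc_interp:
  assumes "ewf G" "y \<in> points G"
  shows "(\<Sum>v\<in>verts G. x v * bsrc G y v) = lin G x y"
proof (cases y)
  case (Vert w)
  then have w: "w \<in> verts G" using assms by simp
  have "(\<Sum>v\<in>verts G. x v * bsrc G y v) = (\<Sum>v\<in>verts G. if v = w then x w else 0)"
    unfolding Vert bsrc_def by (intro sum.cong) auto
  also have "\<dots> = x w" using w ewf_fin[OF assms(1)] by simp
  finally show ?thesis using Vert by simp
next
  case (Inner e c)
  then have ec: "e \<in> edges G" "0 < c" "c < len G e" using assms(2) by auto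
  let ?p = "fst (ends G e)" and ?q = "snd (ends G e)" and ?L = "len G e"
  have pq: "?p \<in> verts G" "?q \<in> verts G" using ewfD[OF assms(1) ec(1)] by auto
  have "(\<Sum>v\<in>verts G. x v * bsrc G y v)
     = (\<Sum>v\<in>verts G. if v = ?p then x ?p * ((?L - c) / ?L) else 0) + (\<Sum>v\<in>verts G. if v = ?q then x ?q * (c / ?L) else 0)"
    unfolding Inner bsrc_def pt.case sum.distrib[symmetric] by (intro sum.cong) (auto simp: algebra_simps)
  also have "\<dots> = x ?p * ((?L - c) / ?L) + x ?q * (c / ?L)"
    using pq ewf_fin[OF assms(1)] by simp
  also have "\<dots> = lin G x y" unfolding Inner lin_def using ec by (simp add: field_simps)
  finally show ?thesis .
qed

lemma sum_by_vertex:
  assumes "finite E" "finite V" "\<forall>e\<in>E. \<pi> e \<in> V"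
  shows "(\<Sum>v\<in>V. \<Sum>e\<in>{e\<in>E. \<pi> e = v}. F e v) = (\<Sum>e\<in>E. F e (\<pi> e))"
proof -
  have "(\<Sum>v\<in>V. \<Sum>e\<in>{e\<in>E. \<pi> e = v}. F e v) = (\<Sum>v\<in>V. \<Sum>e\<in>{e\<in>E. \<pi> e = v}. F e (\<pi> e))"
    by (intro sum.cong refl) auto
  also have "\<dots> = (\<Sum>e\<in>E. F e (\<pi> e))" using assms by (intro sum.group) auto
  finally show ?thesis .
qed

lemma Lap_pair:
  assumes "ewf G"
  shows "(\<Sum>v\<in>verts G. h v * Lap G x v) =
    - (\<Sum>e\<in>edges G. (h (snd (ends G e)) - h (fst (ends G e))) * (x (snd (ends G e)) - x (fst (ends G e))) / len G e)"
proof -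
  have fin: "finite (edges G)" "finite (verts G)" using ewf_fin[OF assms] by auto
  have ends: "\<forall>e\<in>edges G. fst (ends G e) \<in> verts G" "\<forall>e\<in>edges G. snd (ends G e) \<in> verts G"
    using ewfD[OF assms] by auto
  have "(\<Sum>v\<in>verts G. h v * Lap G x v)
     = (\<Sum>v\<in>verts G. \<Sum>e\<in>{e\<in>edges G. fst (ends G e) = v}. h v * ((x (snd (ends G e)) - x v) / len G e))
     + (\<Sum>v\<in>verts G. \<Sum>e\<in>{e\<in>edges G. snd (ends G e) = v}. h v * ((x (fst (ends G e)) - x v) / len G e))"
    unfolding Lap_def by (simp add: sum_distrib_left sum.distrib distrib_left)
  also have "\<dots> = (\<Sum>e\<in>edges G. h (fst (ends G e)) * ((x (snd (ends G e)) - x (fst (ends G e))) / len G e))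
     + (\<Sum>e\<in>edges G. h (snd (ends G e)) * ((x (fst (ends G e)) - x (snd (ends G e))) / len G e))"
    using sum_by_vertex[OF fin ends(1), of "\<lambda>e v. h v * ((x (snd (ends G e)) - x v) / len G e)"]
      sum_by_vertex[OF fin ends(2), of "\<lambda>e v. h v * ((x (fst (ends G e)) - x v) / len G e)"]
    by simp
  also have "\<dots> = - (\<Sum>e\<in>edges G. (h (snd (ends G e)) - h (fst (ends G e))) * (x (snd (ends G e)) - x (fst (ends G e))) / len G e)"
    unfolding sum.distrib[symmetric] sum_negf[symmetric]
    by (intro sum.cong refl, rename_tac e, case_tac "len G e = 0") (simp_all add: field_simps)
  finally show ?thesis .
qed

lemma Lap_sym:
  assumes "ewf G"
  shows "(\<Sum>v\<in>verts G. h v * Lap G x v) = (\<Sum>v\<in>verts G. x v * Lap G h v)"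
  unfolding Lap_pair[OF assms] by (intro arg_cong[where f=uminus] sum.cong refl) (simp add: field_simps)

lemma Lap_sum0:
  assumes "ewf G"
  shows "(\<Sum>v\<in>verts G. Lap G x v) = 0"
  using Lap_pair[OF assms, of "\<lambda>_. 1" x] by simp

lemma Lap_shift: "Lap G (\<lambda>v. x v + k) = Lap G x"
  unfolding Lap_def by (intro ext) simp

lemma adj_verts:
  assumes "ewf G" "adj G u w"
  shows "u \<in> verts G" "w \<in> verts G"
  using assms unfolding adj_def by (auto dest: ewfD)

lemma max_principle:
  assumes wf: "mgraph_wf G" and harm: "\<forall>v\<in>verts G. Lap G x v = 0"
  shows "\<exists>c. \<forall>v\<in>verts G. x v = c"
proof -
  have ewf: "ewf G" using wf by (rule wf_ewf)
  have fin: "finite (verts G)" "verts G \<noteq> {}" using wf unfolding mgraph_wf_def by auto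
  define M where "M = Max (x ` verts G)"
  have le: "x v \<le> M" if "v \<in> verts G" for v unfolding M_def using fin that by (intro Max_ge) auto
  obtain v0 where v0: "v0 \<in> verts G" "x v0 = M" unfolding M_def using fin
    by (metis (mono_tags, lifting) Max_in finite_imageI image_iff image_is_empty)
  have stepM: "x w = M" if u: "u \<in> verts G" "x u = M" and a: "adj G u w" for u w
  proof -
    have w: "w \<in> verts G" using adj_verts[OF ewf a] by simp
    let ?S1 = "\<Sum>e\<in>{e\<in>edges G. fst (ends G e) = u}. (x (snd (ends G e)) - x u) / len G e"
    let ?S2 = "\<Sum>e\<in>{e\<in>edges G. snd (ends G e) = u}. (x (fst (ends G e)) - x u) / len G e"
    have t1: "(x (snd (ends G e)) - x u) / len G e \<le> 0" if "e \<in> {e\<in>edges G. fst (ends G e) = u}" for e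
      using that ewfD[OF ewf, of e] le[of "snd (ends G e)"] u by (auto intro: divide_nonpos_pos)
    have t2: "(x (fst (ends G e)) - x u) / len G e \<le> 0" if "e \<in> {e\<in>edges G. snd (ends G e) = u}" for e
      using that ewfD[OF ewf, of e] le[of "fst (ends G e)"] u by (auto intro: divide_nonpos_pos)
    have s1: "?S1 \<le> 0" using t1 by (rule sum_nonpos)
    have s2: "?S2 \<le> 0" using t2 by (rule sum_nonpos)
    have "?S1 + ?S2 = 0" using harm u unfolding Lap_def by auto
    then have z1: "?S1 = 0" and z2: "?S2 = 0" using s1 s2 by auto
    have fe: "finite (edges G)" using ewf_fin[OF ewf] by simp
    have a1: "\<forall>e\<in>{e\<in>edges G. fst (ends G e) = u}. (x (snd (ends G e)) - x u) / len G e = 0"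
    proof -
      have fS: "finite {e\<in>edges G. fst (ends G e) = u}" using fe by simp
      have nn: "0 \<le> - ((x (snd (ends G e)) - x u) / len G e)" if "e \<in> {e\<in>edges G. fst (ends G e) = u}" for e
        using t1[OF that] by simp
      have s0: "(\<Sum>e\<in>{e\<in>edges G. fst (ends G e) = u}. - ((x (snd (ends G e)) - x u) / len G e)) = 0"
        using z1 by (simp add: sum_negf)
      have "\<forall>e\<in>{e\<in>edges G. fst (ends G e) = u}. - ((x (snd (ends G e)) - x u) / len G e) = 0"
        using sum_nonneg_eq_0_iff[OF fS nn] s0 by simp
      then show ?thesis by simp
    qed
    have a2: "\<forall>e\<in>{e\<in>edges G. snd (ends G e) = u}. (x (fst (ends G e)) - x u) / len G e = 0"
    proof -
      have fS: "finite {e\<in>edges G. snd (ends G e) = u}" using fe by simp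
      have nn: "0 \<le> - ((x (fst (ends G e)) - x u) / len G e)" if "e \<in> {e\<in>edges G. snd (ends G e) = u}" for e
        using t2[OF that] by simp
      have s0: "(\<Sum>e\<in>{e\<in>edges G. snd (ends G e) = u}. - ((x (fst (ends G e)) - x u) / len G e)) = 0"
        using z2 by (simp add: sum_negf)
      have "\<forall>e\<in>{e\<in>edges G. snd (ends G e) = u}. - ((x (fst (ends G e)) - x u) / len G e) = 0"
        using sum_nonneg_eq_0_iff[OF fS nn] s0 by simp
      then show ?thesis by simp
    qed
    obtain e where e: "e \<in> edges G" "ends G e = (u, w) \<or> ends G e = (w, u)" using a unfolding adj_def by auto
    have L: "len G e > 0" using ewfD[OF ewf e(1)] by simp
    from e(2) show ?thesis
    proof
      assume "ends G e = (u, w)"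
      then have "(x w - x u) / len G e = 0" using a1 e(1) by force
      then show ?thesis using L u by simp
    next
      assume "ends G e = (w, u)"
      then have "(x w - x u) / len G e = 0" using a2 e(1) by force
      then show ?thesis using L u by simp
    qed
  qed
  have reach: "x w = M" if "(adj G)\<^sup>*\<^sup>* v0 w" for w
    using that
  proof (induction rule: rtranclp_induct)
    case base
    then show ?case using v0 by simp
  next
    case (step u w)
    have "u \<in> verts G" using adj_verts[OF ewf step(2)] by simp
    then show ?case using \<open>adj G u w\<close> step(3) by (intro stepM[of u w]) auto
  qed
  have "\<forall>v\<in>verts G. x v = M"
    using wf v0(1) reach unfolding mgraph_wf_def graph_connected_def vconn_def by blast
  then show ?thesis by blast
qed

lemma Lap_delta:
  assumes "ewf G" "u \<in> verts G"
  shows "Lap G x u = (\<Sum>w\<in>verts G. Lap G (\<lambda>v. if v = w then 1 else 0) u * x w)"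
proof -
  have fin: "finite (verts G)" "finite (edges G)" using ewf_fin[OF assms(1)] by auto
  have key: "(\<Sum>w\<in>verts G. (((if q = w then 1 else 0) - (if u = w then 1 else 0)) / L) * x w) = (x q - x u) / L"
    if "q \<in> verts G" for q L
  proof -
    have "(\<Sum>w\<in>verts G. (((if q = w then 1 else 0) - (if u = w then 1 else 0)) / L) * x w)
       = (\<Sum>w\<in>verts G. (if w = q then x q / L else 0) - (if w = u then x u / L else 0))"
      by (intro sum.cong refl) auto
    also have "\<dots> = x q / L - x u / L" using fin that assms(2) by (simp add: sum_subtractf)
    finally show ?thesis by (simp add: diff_divide_distrib)
  qed
  have "(\<Sum>w\<in>verts G. Lap G (\<lambda>v. if v = w then 1 else 0) u * x w)
     = (\<Sum>w\<in>verts G. \<Sum>e\<in>{e\<in>edges G. fst (ends G e) = u}. (((if snd (ends G e) = w then 1 else 0) - (if u = w then 1 else 0)) / len G e) * x w)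
     + (\<Sum>w\<in>verts G. \<Sum>e\<in>{e\<in>edges G. snd (ends G e) = u}. (((if fst (ends G e) = w then 1 else 0) - (if u = w then 1 else 0)) / len G e) * x w)"
    unfolding Lap_def by (simp add: sum_distrib_right sum.distrib distrib_right)
  also have "\<dots> = (\<Sum>e\<in>{e\<in>edges G. fst (ends G e) = u}. \<Sum>w\<in>verts G. (((if snd (ends G e) = w then 1 else 0) - (if u = w then 1 else 0)) / len G e) * x w)
     + (\<Sum>e\<in>{e\<in>edges G. snd (ends G e) = u}. \<Sum>w\<in>verts G. (((if fst (ends G e) = w then 1 else 0) - (if u = w then 1 else 0)) / len G e) * x w)"
    by (simp only: sum.swap[of _ "verts G"])
  also have "\<dots> = Lap G x u"
    unfolding Lap_def using key ewfD[OF assms(1)] by (intro arg_cong2[where f="(+)"] sum.cong refl) auto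
  finally show ?thesis by simp
qed

lemma lap_solve:
  assumes wf: "mgraph_wf G" and sb: "(\<Sum>v\<in>verts G. b v) = 0"
  shows "\<exists>x. \<forall>v\<in>verts G. Lap G x v = b v"
proof -
  have ewf: "ewf G" using wf by (rule wf_ewf)
  have fin: "finite (verts G)" "verts G \<noteq> {}" using wf unfolding mgraph_wf_def by auto
  obtain z where z: "z \<in> verts G" using fin by auto
  obtain xs where xs: "set xs = verts G" "distinct xs" using finite_distinct_list[OF fin(1)] by blast
  define c where "c u w = (if u = z then (if w = z then 1 else 0) else Lap G (\<lambda>v. if v = w then 1 else 0) u)" for u w
  have cs: "(\<Sum>w\<in>verts G. c u w * x w) = (if u = z then x z else Lap G x u)" if "u \<in> verts G" for u x
  proof (cases "u = z")
    case True
    have "(\<Sum>w\<in>verts G. c u w * x w) = (\<Sum>w\<in>verts G. if w = z then x z else 0)"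
      unfolding c_def using True by (intro sum.cong refl) auto
    then show ?thesis using True z fin by simp
  next
    case False
    then show ?thesis unfolding c_def using Lap_delta[OF ewf that, of x] by simp
  qed
  have split: "(\<Sum>v\<in>verts G. f v) = f z + (\<Sum>v\<in>verts G - {z}. f v)" for f :: "'a \<Rightarrow> real"
    using fin(1) z by (simp add: sum.remove)
  have inj: "\<forall>u\<in>set xs. x u = 0" if h: "\<forall>u\<in>set xs. (\<Sum>w\<in>set xs. c u w * x w) = 0" for x
  proof -
    have xz: "x z = 0" using h cs[OF z, of x] xs(1) z by auto
    have l: "Lap G x u = 0" if "u \<in> verts G" "u \<noteq> z" for u using h cs[OF that(1), of x] xs(1) that by auto
    have "Lap G x z = 0"
    proof -
      have "(\<Sum>v\<in>verts G - {z}. Lap G x v) = 0" using l by (intro sum.neutral) auto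
      then show ?thesis using Lap_sum0[OF ewf, of x] split[of "Lap G x"] by simp
    qed
    then have "\<forall>v\<in>verts G. Lap G x v = 0" using l by blast
    then obtain k where "\<forall>v\<in>verts G. x v = k" using max_principle[OF wf] by blast
    then show ?thesis using xz z xs(1) by auto
  qed
  obtain x where x: "\<forall>u\<in>set xs. (\<Sum>w\<in>set xs. c u w * x w) = (if u = z then 0 else b u)"
  proof -
    have "\<exists>x. \<forall>u\<in>set xs. (\<Sum>w\<in>set xs. c u w * x w) = (if u = z then 0 else b u)"
      by (rule la_solve[OF xs(2) inj])
    then show ?thesis using that by blast
  qed
  have l: "Lap G x u = b u" if "u \<in> verts G" "u \<noteq> z" for u using x cs[OF that(1), of x] xs(1) that by auto
  have "Lap G x z = b z"
  proof -
    have "(\<Sum>v\<in>verts G - {z}. Lap G x v) = (\<Sum>v\<in>verts G - {z}. b v)" using l by (intro sum.cong) auto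
    then show ?thesis using Lap_sum0[OF ewf, of x] split[of "Lap G x"] split[of b] sb by simp
  qed
  then show ?thesis using l by blast
qed

lemma is_voltage_iff:
  "is_voltage G y z f \<longleftrightarrow> f z = 0 \<and> (\<forall>p. p \<notin> points G \<longrightarrow> f p = 0) \<and> pwa G {y,z} f \<and>
     (\<forall>p\<in>points G. outflow G f p = (if p = y then -1 else 0) + (if p = z then 1 else 0))"
proof -
  have "(\<forall>c. a < c \<and> c < b \<longrightarrow> Inner e c \<notin> {y,z}) \<longleftrightarrow> (\<forall>c. a < c \<and> c < b \<longrightarrow> Inner e c \<noteq> y \<and> Inner e c \<noteq> z)"
    for a b :: real and e by simp
  then show ?thesis unfolding is_voltage_def pwa_def by simp
qed

lemma outflow_add:
  assumes "ewf G" "pwa G S f" "pwa G S g" "finite S" "p \<in> points G"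
  shows "outflow G (\<lambda>x. f x + g x) p = outflow G f p + outflow G g p"
  using outflow_lin[OF assms, of 1 1 0] by simp

lemma outflow_diff:
  assumes "ewf G" "pwa G S f" "pwa G S g" "finite S" "p \<in> points G"
  shows "outflow G (\<lambda>x. f x - g x) p = outflow G f p - outflow G g p"
  using outflow_lin[OF assms, of 1 "-1" 0] by simp

lemma outflow_affine:
  assumes "ewf G" "pwa G S f" "finite S" "p \<in> points G"
  shows "outflow G (\<lambda>x. a * f x + k) p = a * outflow G f p"
  using outflow_lin[OF assms(1,2,2,3,4), of a 0 k] by simp

lemma pwa_add: "pwa G S f \<Longrightarrow> pwa G S g \<Longrightarrow> pwa G S (\<lambda>x. f x + g x)"
  using pwa_lin[of G S f g 1 1 0] by simp

lemma pwa_diff: "pwa G S f \<Longrightarrow> pwa G S g \<Longrightarrow> pwa G S (\<lambda>x. f x - g x)"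
  using pwa_lin[of G S f g 1 "-1" 0] by simp

lemma pwa_affine: "pwa G S f \<Longrightarrow> pwa G S (\<lambda>x. a * f x + k)"
  using pwa_lin[of G S f f a 0 k] by simp

lemma glue:
  fixes g :: "real \<Rightarrow> real"
  assumes fC: "finite C"
    and aff: "\<And>u v. a \<le> u \<Longrightarrow> u < v \<Longrightarrow> v \<le> b \<Longrightarrow> (\<forall>c\<in>C. \<not> (u < c \<and> c < v)) \<Longrightarrow> \<exists>\<alpha> \<beta>. \<forall>x\<in>{u..v}. g x = \<alpha> + \<beta> * x"
    and kink: "\<And>c. c \<in> C \<Longrightarrow> a < c \<Longrightarrow> c < b \<Longrightarrow> dslope g c 1 + dslope g c (-1) = 0"
    and ab: "a < b"
  shows "\<exists>\<alpha> \<beta>. \<forall>x\<in>{a..b}. g x = \<alpha> + \<beta> * x"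
proof -
  define n where "n = card {c\<in>C. a < c \<and> c < b}"
  then show ?thesis using aff kink ab
  proof (induction n arbitrary: a rule: less_induct)
    case (less n a)
    show ?case
    proof (cases "{c\<in>C. a < c \<and> c < b} = {}")
      case True
      then show ?thesis using less.prems(2)[of a b] less.prems(4) by auto
    next
      case False
      define K where "K = {c\<in>C. a < c \<and> c < b}"
      have fK: "finite K" unfolding K_def using fC by simp
      define c0 where "c0 = Min K"
      have c0K: "c0 \<in> K" unfolding c0_def using False fK K_def by (intro Min_in) auto
      then have c0: "c0 \<in> C" "a < c0" "c0 < b" unfolding K_def by auto
      have minc: "c0 \<le> c" if "c \<in> C" "a < c" "c < b" for c
        unfolding c0_def using fK that K_def by (intro Min_le) auto
      obtain a1 b1 where 1: "\<forall>x\<in>{a..c0}. g x = a1 + b1 * x"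
        using less.prems(2)[of a c0] c0 minc by force
      have sub: "{c\<in>C. c0 < c \<and> c < b} \<subset> K" unfolding K_def using c0 by auto
      have lt: "card {c\<in>C. c0 < c \<and> c < b} < n" unfolding less.prems(1) K_def[symmetric]
        using sub fK by (rule psubset_card_mono[rotated])
      have "\<exists>\<alpha> \<beta>. \<forall>x\<in>{c0..b}. g x = \<alpha> + \<beta> * x"
        apply (rule less.IH[OF lt refl])
        subgoal for u v using less.prems(2)[of u v] c0 by auto
        subgoal for c using less.prems(3)[of c] c0 by auto
        using c0 by simp
      then obtain a2 b2 where 2: "\<forall>x\<in>{c0..b}. g x = a2 + b2 * x" by blast
      have r: "dslope g c0 1 = b2" using 2 c0 by (intro dslope_right[of "b - c0" _ _ a2]) auto
      have l: "dslope g c0 (-1) = - b1" using 1 c0 by (intro dslope_left[of "c0 - a" _ _ a1]) auto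
      have "b1 = b2" using less.prems(3)[OF c0] r l by simp
      moreover have "a1 + b1 * c0 = a2 + b2 * c0" using 1[rule_format, of c0] 2[rule_format, of c0] c0 by simp
      ultimately have "a1 = a2" by simp
      show ?thesis
      proof (rule exI[of _ a1], rule exI[of _ b1], rule ballI)
        fix x assume x: "x \<in> {a..b}"
        show "g x = a1 + b1 * x"
        proof (cases "x \<le> c0")
          case True
          then show ?thesis using 1 x by auto
        next
          case False
          then show ?thesis using 2 x \<open>a1 = a2\<close> \<open>b1 = b2\<close> by auto
        qed
      qed
    qed
  qed
qed

lemma edge_affine_harm:
  assumes ewf: "ewf G" and pw: "pwa G S h" and fS: "finite S"
    and harm: "\<forall>p\<in>points G. outflow G h p = 0" and e: "e \<in> edges G"
  shows "\<forall>t. 0 \<le> t \<and> t \<le> len G e \<longrightarrow>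
     h (edge_pt G e t) = h (Vert (fst (ends G e))) + (h (Vert (snd (ends G e))) - h (Vert (fst (ends G e)))) * t / len G e"
proof -
  have L: "len G e > 0" using ewfD[OF ewf e] by simp
  have "\<exists>\<alpha> \<beta>. \<forall>x\<in>{0..len G e}. h (edge_pt G e x) = \<alpha> + \<beta> * x"
  proof (rule glue[of "Inner e -` S"])
    show "finite (Inner e -` S)" using fS by (rule finite_Inner_vimage)
    show "0 < len G e" by (rule L)
  next
    fix u v :: real assume uv: "0 \<le> u" "u < v" "v \<le> len G e" "\<forall>c\<in>Inner e -` S. \<not> (u < c \<and> c < v)"
    then have "\<forall>c. u < c \<and> c < v \<longrightarrow> Inner e c \<notin> S" by auto
    then show "\<exists>\<alpha> \<beta>. \<forall>x\<in>{u..v}. h (edge_pt G e x) = \<alpha> + \<beta> * x"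
      using pw e uv unfolding pwa_def by blast
  next
    fix c assume c: "c \<in> Inner e -` S" "0 < c" "c < len G e"
    then have ip: "Inner e c \<in> points G" using e by simp
    show "dslope (\<lambda>x. h (edge_pt G e x)) c 1 + dslope (\<lambda>x. h (edge_pt G e x)) c (-1) = 0"
      using harm[rule_format, OF ip] unfolding outflow_def by simp
  qed
  then obtain \<alpha> \<beta> where ab: "\<forall>x\<in>{0..len G e}. h (edge_pt G e x) = \<alpha> + \<beta> * x" by blast
  have "h (Vert (fst (ends G e))) = \<alpha>" using ab[rule_format, of 0] L by simp
  moreover have "h (Vert (snd (ends G e))) = \<alpha> + \<beta> * len G e" using ab[rule_format, of "len G e"] L by simp
  ultimately show ?thesis using ab L by (auto simp: field_simps)
qed

lemma harmonic_const:
  assumes wf: "mgraph_wf G" and pw: "pwa G S h" and fS: "finite S"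
    and harm: "\<forall>p\<in>points G. outflow G h p = 0"
  shows "\<exists>k. \<forall>p\<in>points G. h p = k"
proof -
  have ewf: "ewf G" using wf by (rule wf_ewf)
  note aff = edge_affine_harm[OF ewf pw fS harm]
  have "\<forall>v\<in>verts G. Lap G (\<lambda>w. h (Vert w)) v = 0"
  proof
    fix v assume v: "v \<in> verts G"
    have "outflow G h (Vert v) = Lap G (\<lambda>w. h (Vert w)) v"
      using aff by (intro outflow_vert_affine[OF ewf v]) auto
    then show "Lap G (\<lambda>w. h (Vert w)) v = 0" using harm v by simp
  qed
  then obtain k where k: "\<forall>v\<in>verts G. h (Vert v) = k" using max_principle[OF wf] by blast
  have "h p = k" if p: "p \<in> points G" for p
  proof (cases p)
    case (Vert v)
    then show ?thesis using k p by simp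
  next
    case (Inner e t)
    then have et: "e \<in> edges G" "0 < t" "t < len G e" using p by auto
    have "h (edge_pt G e t) = k"
      using aff[OF et(1)] et k ewfD[OF ewf et(1)] by auto
    then show ?thesis using Inner et by (simp add: edge_pt_mid)
  qed
  then show ?thesis by blast
qed

lemma volt_unique:
  assumes wf: "mgraph_wf G" and z: "z \<in> points G" and f: "is_voltage G y z f" and g: "is_voltage G y z g"
  shows "f = g"
proof -
  have ewf: "ewf G" using wf by (rule wf_ewf)
  have pf: "pwa G {y,z} f" and pg: "pwa G {y,z} g" using f g unfolding is_voltage_iff by auto
  have "\<forall>p\<in>points G. outflow G (\<lambda>x. f x - g x) p = 0"
    using outflow_diff[OF ewf pf pg] f g unfolding is_voltage_iff by simp
  then obtain k where k: "\<forall>p\<in>points G. f p - g p = k"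
    using harmonic_const[OF wf pwa_diff[OF pf pg]] by auto
  have "k = 0" using k z f g unfolding is_voltage_iff by force
  show ?thesis
  proof
    fix p
    show "f p = g p"
    proof (cases "p \<in> points G")
      case True
      then show ?thesis using k \<open>k = 0\<close> by auto
    next
      case False
      then show ?thesis using f g unfolding is_voltage_iff by auto
    qed
  qed
qed

definition vf :: "('v,'e) mgraph \<Rightarrow> ('v \<Rightarrow> real) \<Rightarrow> ('v,'e) pt \<Rightarrow> ('v,'e) pt \<Rightarrow> ('v,'e) pt \<Rightarrow> real" where
  "vf G x y z p = (if p \<in> points G then lin G x p + ttent G y p - ttent G z p else 0)"

lemma lin_shift: "lin G (\<lambda>v. x v + k) p = lin G x p + k"
  unfolding lin_def by (simp split: pt.split add: algebra_simps)

lemma lin_one: "lin G (\<lambda>v. 1) p = 1"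
  unfolding lin_def by (simp split: pt.split)

lemma volt_exists:
  assumes wf: "mgraph_wf G" and y: "y \<in> points G" and z: "z \<in> points G"
  shows "\<exists>x. is_voltage G y z (vf G x y z) \<and> (\<forall>v\<in>verts G. Lap G x v = bsrc G z v - bsrc G y v)"
proof -
  have ewf: "ewf G" using wf by (rule wf_ewf)
  have "(\<Sum>v\<in>verts G. bsrc G z v - bsrc G y v) = 0"
    using bsrc_interp[OF ewf z, of "\<lambda>_. 1"] bsrc_interp[OF ewf y, of "\<lambda>_. 1"]
    by (simp add: sum_subtractf lin_one)
  then obtain x0 where x0: "\<forall>v\<in>verts G. Lap G x0 v = bsrc G z v - bsrc G y v"
    using lap_solve[OF wf] by blast
  define k where "k = lin G x0 z + ttent G y z - ttent G z z"
  define x where "x v = x0 v + (- k)" for v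
  have Lx: "\<forall>v\<in>verts G. Lap G x v = bsrc G z v - bsrc G y v"
    using x0 unfolding x_def Lap_shift by simp
  have linx: "lin G x p = lin G x0 p - k" for p unfolding x_def lin_shift by simp
  define \<Phi> where "\<Phi> p = lin G x p + ttent G y p - ttent G z p" for p
  have pA: "pwa G {y,z} (\<lambda>p. lin G x p + ttent G y p)"
    using lin_pwa[OF ewf] ttent_pwa[OF ewf y] by (intro pwa_add) (auto intro: pwa_mono)
  have pB: "pwa G {y,z} (ttent G z)" using ttent_pwa[OF ewf z] by (auto intro: pwa_mono)
  have pPhi: "pwa G {y,z} \<Phi>" unfolding \<Phi>_def using pwa_diff[OF pA pB] by simp
  have eqv: "vf G x y z p = \<Phi> p" if "p \<in> points G" for p using that unfolding vf_def \<Phi>_def by simp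
  have out: "outflow G \<Phi> p = (if p = y then -1 else 0) + (if p = z then 1 else 0)" if p: "p \<in> points G" for p
  proof -
    have "outflow G \<Phi> p = outflow G (lin G x) p + outflow G (ttent G y) p - outflow G (ttent G z) p"
      unfolding \<Phi>_def
      using outflow_diff[OF ewf pA pB _ p] outflow_add[OF ewf lin_pwa[OF ewf] pwa_mono[OF ttent_pwa[OF ewf y]] _ p]
      by simp
    also have "\<dots> = (if p = y then -1 else 0) + (if p = z then 1 else 0)"
    proof (cases p)
      case (Vert v)
      then have v: "v \<in> verts G" using p by simp
      show ?thesis
        unfolding Vert lin_outflow[OF ewf p[unfolded Vert]] ttent_outflow[OF ewf y p[unfolded Vert]]
          ttent_outflow[OF ewf z p[unfolded Vert]] pt.case Lx[rule_format, OF v]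
        by (cases y; cases z) (auto simp: bsrc_def isInner_def)
    next
      case (Inner e u)
      show ?thesis
        unfolding Inner lin_outflow[OF ewf p[unfolded Inner]] ttent_outflow[OF ewf y p[unfolded Inner]]
          ttent_outflow[OF ewf z p[unfolded Inner]] pt.case
        by simp
    qed
    finally show ?thesis .
  qed
  have "is_voltage G y z (vf G x y z)"
    unfolding is_voltage_iff
  proof (intro conjI allI impI ballI)
    show "vf G x y z z = 0" using z eqv[OF z] unfolding \<Phi>_def linx k_def by simp
    show "vf G x y z p = 0" if "p \<notin> points G" for p using that unfolding vf_def by simp
    show "pwa G {y, z} (vf G x y z)" by (rule pwa_cong[OF ewf _ pPhi]) (simp add: eqv)
    show "outflow G (vf G x y z) p = (if p = y then -1 else 0) + (if p = z then 1 else 0)"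
      if "p \<in> points G" for p
      using outflow_cong[OF ewf eqv that] out[OF that] by simp
  qed
  then show ?thesis using Lx by blast
qed

lemma jfun_eq:
  assumes "mgraph_wf G" "z \<in> points G" "is_voltage G y z f"
  shows "jfun G z p y = f p"
proof -
  have "(THE f. is_voltage G y z f) = f"
    using assms volt_unique[OF assms(1,2)] by (intro the_equality) auto
  then show ?thesis unfolding jfun_def by simp
qed

lemma del_simps[simp]:
  "verts (delete_edge G e) = verts G" "edges (delete_edge G e) = edges G - {e}"
  "ends (delete_edge G e) = ends G" "len (delete_edge G e) = len G"
  unfolding delete_edge_def by simp_all

lemma setl_simps[simp]:
  "verts (set_length G e l) = verts G" "edges (set_length G e l) = edges G"
  "ends (set_length G e l) = ends G" "len (set_length G e l) = (len G)(e := l)"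
  unfolding set_length_def by simp_all

lemma setl_same: "set_length G e (len G e) = G"
  unfolding set_length_def by simp

lemma edge_pt_del[simp]: "edge_pt (delete_edge G e) = edge_pt G"
  by (intro ext) (simp add: edge_pt_def)

lemma edge_pt_setl_other: "e' \<noteq> e \<Longrightarrow> edge_pt (set_length G e l) e' = edge_pt G e'"
  by (intro ext) (simp add: edge_pt_def)

lemma edge_pt_setl_same: "edge_pt (set_length G e l) e u = (if u = 0 then Vert (fst (ends G e)) else if u = l then Vert (snd (ends G e)) else Inner e u)"
  unfolding edge_pt_def by simp

lemma ewf_del: "ewf G \<Longrightarrow> ewf (delete_edge G e)"
  unfolding ewf_def by auto

lemma ewf_setl: "ewf G \<Longrightarrow> l > 0 \<Longrightarrow> ewf (set_length G e l)"
  unfolding ewf_def by auto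

lemma adj_setl[simp]: "adj (set_length G e l) = adj G"
  unfolding adj_def[abs_def] by simp

lemma wf_setl: "mgraph_wf G \<Longrightarrow> l > 0 \<Longrightarrow> mgraph_wf (set_length G e l)"
  unfolding mgraph_wf_def graph_connected_def vconn_def by auto

lemma points_del: "p \<in> points (delete_edge G e) \<longleftrightarrow> p \<in> points G \<and> (\<forall>c. p \<noteq> Inner e c)"
  by (cases p) auto

lemma points_setl:
  assumes "e \<in> edges G"
  shows "p \<in> points (set_length G e l) \<longleftrightarrow> p \<in> points (delete_edge G e) \<or> (\<exists>u. p = Inner e u \<and> 0 < u \<and> u < l)"
  using assms by (cases p) auto

lemma wf_del: "mgraph_wf G \<Longrightarrow> e \<in> edges G \<Longrightarrow> \<not> is_bridge G e \<Longrightarrow> mgraph_wf (delete_edge G e)"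
  unfolding is_bridge_def mgraph_wf_def by auto

lemma sum_split_e:
  assumes "finite E" "e \<in> E"
  shows "(\<Sum>e'\<in>{e'\<in>E. P e'}. g e') = (if P e then g e else 0) + (\<Sum>e'\<in>{e'\<in>E - {e}. P e'}. g e')"
proof (cases "P e")
  case True
  have "{e'\<in>E - {e}. P e'} = {e'\<in>E. P e'} - {e}" by auto
  then show ?thesis using True assms by (simp add: sum.remove)
next
  case False
  then have "{e'\<in>E - {e}. P e'} = {e'\<in>E. P e'}" by auto
  then show ?thesis using False by simp
qed

lemma outflow_split_vert:
  assumes ewf: "ewf G" and e: "e \<in> edges G" and l: "l > 0"
    and aff: "\<And>u. 0 \<le> u \<Longrightarrow> u \<le> l \<Longrightarrow> F (edge_pt (set_length G e l) e u)
        = F (Vert (fst (ends G e))) + (F (Vert (snd (ends G e))) - F (Vert (fst (ends G e)))) * u / l"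
  shows "outflow (set_length G e l) F (Vert v) = outflow (delete_edge G e) F (Vert v)
     + (if fst (ends G e) = v then (F (Vert (snd (ends G e))) - F (Vert (fst (ends G e)))) / l else 0)
     + (if snd (ends G e) = v then (F (Vert (fst (ends G e))) - F (Vert (snd (ends G e)))) / l else 0)"
proof -
  let ?P = "F (Vert (fst (ends G e)))" and ?Q = "F (Vert (snd (ends G e)))"
  let ?Gl = "set_length G e l"
  have fE: "finite (edges G)" using ewf_fin[OF ewf] by simp
  have d1: "dslope (\<lambda>u. F (edge_pt ?Gl e u)) 0 1 = (?Q - ?P) / l"
    using aff l by (intro dslope_right[of l _ _ ?P]) (auto simp: field_simps)
  have d2: "dslope (\<lambda>u. F (edge_pt ?Gl e u)) l (-1) = (?P - ?Q) / l"
  proof -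
    have "dslope (\<lambda>u. F (edge_pt ?Gl e u)) l (-1) = - ((?Q - ?P) / l)"
      using aff l by (intro dslope_left[of l _ _ ?P]) (auto simp: field_simps)
    then show ?thesis by (simp add: minus_divide_left)
  qed
  have o1: "(\<Sum>e'\<in>{e'\<in>edges G - {e}. fst (ends G e') = v}. dslope (\<lambda>u. F (edge_pt ?Gl e' u)) 0 1)
    = (\<Sum>e'\<in>{e'\<in>edges G - {e}. fst (ends G e') = v}. dslope (\<lambda>u. F (edge_pt G e' u)) 0 1)"
    by (intro sum.cong refl) (simp add: edge_pt_setl_other)
  have o2: "(\<Sum>e'\<in>{e'\<in>edges G - {e}. snd (ends G e') = v}. dslope (\<lambda>u. F (edge_pt ?Gl e' u)) (((len G)(e := l)) e') (-1))
    = (\<Sum>e'\<in>{e'\<in>edges G - {e}. snd (ends G e') = v}. dslope (\<lambda>u. F (edge_pt G e' u)) (len G e') (-1))"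
    by (intro sum.cong refl) (simp add: edge_pt_setl_other)
  show ?thesis
    unfolding outflow_def pt.case setl_simps del_simps edge_pt_del
    apply (subst sum_split_e[OF fE e])
    apply (subst sum_split_e[OF fE e])
    using d1 d2 o1 o2 by simp
qed

lemma outflow_split_inner:
  assumes "e' \<noteq> e"
  shows "outflow (set_length G e l) F (Inner e' u) = outflow (delete_edge G e) F (Inner e' u)"
  unfolding outflow_def using assms by (simp add: edge_pt_setl_other)

lemma pwa_restrict:
  assumes "pwa (set_length G e l) S f"
  shows "pwa (delete_edge G e) S f"
  unfolding pwa_def
proof (intro ballI)
  fix e' assume e': "e' \<in> edges (delete_edge G e)"
  then have ne: "e' \<noteq> e" "e' \<in> edges (set_length G e l)" by auto
  have "len (set_length G e l) e' = len (delete_edge G e) e'" using ne by simp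
  moreover have "edge_pt (set_length G e l) e' = edge_pt (delete_edge G e) e'" using ne by (simp add: edge_pt_setl_other)
  ultimately show "continuous_on {0..len (delete_edge G e) e'} (\<lambda>t. f (edge_pt (delete_edge G e) e' t)) \<and>
        (\<forall>a b. 0 \<le> a \<and> a < b \<and> b \<le> len (delete_edge G e) e' \<and> (\<forall>c. a < c \<and> c < b \<longrightarrow> Inner e' c \<notin> S) \<longrightarrow>
               (\<exists>\<alpha> \<beta>. \<forall>t\<in>{a..b}. f (edge_pt (delete_edge G e) e' t) = \<alpha> + \<beta> * t))"
    using assms ne(2) unfolding pwa_def by metis
qed

lemma pwa_edge_affine:
  assumes "pwa G S f" "e \<in> edges G" "\<forall>c. Inner e c \<notin> S" "len G e > 0" "0 \<le> u" "u \<le> len G e"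
  shows "f (edge_pt G e u) = f (Vert (fst (ends G e))) + (f (Vert (snd (ends G e))) - f (Vert (fst (ends G e)))) * u / len G e"
proof -
  obtain \<alpha> \<beta> where ab: "\<forall>t\<in>{0..len G e}. f (edge_pt G e t) = \<alpha> + \<beta> * t"
    using assms(1-4) unfolding pwa_def by blast
  have "f (Vert (fst (ends G e))) = \<alpha>" using ab[rule_format, of 0] assms(4) by simp
  moreover have "f (Vert (snd (ends G e))) = \<alpha> + \<beta> * len G e" using ab[rule_format, of "len G e"] assms(4) by simp
  ultimately show ?thesis using ab assms(4-6) by (auto simp: field_simps)
qed

definition ext :: "('v,'e) mgraph \<Rightarrow> 'e \<Rightarrow> real \<Rightarrow> (('v,'e) pt \<Rightarrow> real) \<Rightarrow> ('v,'e) pt \<Rightarrow> real" where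
  "ext G e l \<psi> p = (if p \<in> points (delete_edge G e) then \<psi> p else
     (case p of Vert v \<Rightarrow> 0 | Inner e' u \<Rightarrow>
        if e' = e \<and> 0 < u \<and> u < l then
          \<psi> (Vert (fst (ends G e))) + (\<psi> (Vert (snd (ends G e))) - \<psi> (Vert (fst (ends G e)))) * u / l
        else 0))"

lemma ext_edge:
  assumes "ewf G" "e \<in> edges G" "l > 0" "0 \<le> u" "u \<le> l"
  shows "ext G e l \<psi> (edge_pt (set_length G e l) e u)
     = ext G e l \<psi> (Vert (fst (ends G e))) + (ext G e l \<psi> (Vert (snd (ends G e))) - ext G e l \<psi> (Vert (fst (ends G e)))) * u / l"
  using assms ewfD[OF assms(1,2)] unfolding edge_pt_setl_same ext_def by (auto simp: points_del)

lemma ext_volt: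
  assumes wf: "mgraph_wf G" and e: "e \<in> edges G" and l: "l > 0"
    and s: "s \<in> points (delete_edge G e)" and t: "t \<in> points (delete_edge G e)"
    and pw: "pwa (delete_edge G e) {s,t} \<psi>" and \<psi>t: "\<psi> t = 0"
    and inner: "\<forall>p\<in>points (delete_edge G e). isInner p \<longrightarrow>
        outflow (delete_edge G e) \<psi> p = (if p = s then -1 else 0) + (if p = t then 1 else 0)"
    and vert: "\<forall>v\<in>verts G. outflow (delete_edge G e) \<psi> (Vert v)
        + (if fst (ends G e) = v then (\<psi> (Vert (snd (ends G e))) - \<psi> (Vert (fst (ends G e)))) / l else 0)
        + (if snd (ends G e) = v then (\<psi> (Vert (fst (ends G e))) - \<psi> (Vert (snd (ends G e)))) / l else 0)
        = (if Vert v = s then -1 else 0) + (if Vert v = t then 1 else 0)"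
  shows "is_voltage (set_length G e l) s t (ext G e l \<psi>)"
proof -
  let ?H = "delete_edge G e" and ?Gl = "set_length G e l" and ?F = "ext G e l \<psi>"
  have ewf: "ewf G" using wf by (rule wf_ewf)
  have ewfH: "ewf ?H" using ewf by (rule ewf_del)
  have ewfGl: "ewf ?Gl" using ewf l by (rule ewf_setl)
  have eqH: "?F p = \<psi> p" if "p \<in> points ?H" for p using that unfolding ext_def by simp
  have PQ: "Vert (fst (ends G e)) \<in> points ?H" "Vert (snd (ends G e)) \<in> points ?H" using ewfD[OF ewf e] by auto
  have affe: "?F (edge_pt ?Gl e u) = ?F (Vert (fst (ends G e))) + (?F (Vert (snd (ends G e))) - ?F (Vert (fst (ends G e)))) * u / l"
    if "0 \<le> u" "u \<le> l" for u using ext_edge[OF ewf e l that] .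
  show ?thesis
    unfolding is_voltage_iff
  proof (intro conjI allI impI ballI)
    show "?F t = 0" using eqH[OF t] \<psi>t by simp
  next
    fix p assume p: "p \<notin> points ?Gl"
    then show "?F p = 0" unfolding ext_def using points_setl[OF e, of p l] by (auto split: pt.split)
  next
    show "pwa ?Gl {s,t} ?F"
      unfolding pwa_def
    proof (intro ballI)
      fix e' assume e': "e' \<in> edges ?Gl"
      show "continuous_on {0..len ?Gl e'} (\<lambda>u. ?F (edge_pt ?Gl e' u)) \<and>
        (\<forall>a b. 0 \<le> a \<and> a < b \<and> b \<le> len ?Gl e' \<and> (\<forall>c. a < c \<and> c < b \<longrightarrow> Inner e' c \<notin> {s,t}) \<longrightarrow>
           (\<exists>\<alpha> \<beta>. \<forall>u\<in>{a..b}. ?F (edge_pt ?Gl e' u) = \<alpha> + \<beta> * u))"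
      proof (cases "e' = e")
        case True
        have aff2: "?F (edge_pt ?Gl e u) = ?F (Vert (fst (ends G e)))
             + ((?F (Vert (snd (ends G e))) - ?F (Vert (fst (ends G e)))) / len ?Gl e) * u"
          if "0 \<le> u" "u \<le> len ?Gl e" for u using affe[of u] that by simp
        show ?thesis using True affine_pwa_edge[OF aff2] by blast
      next
        case False
        then have e'H: "e' \<in> edges ?H" using e' by simp
        have eq: "?F (edge_pt ?Gl e' u) = \<psi> (edge_pt ?H e' u)" if "u \<in> {0..len ?H e'}" for u
          using eqH[OF edge_pt_points[OF ewfH e'H]] that False by (simp add: edge_pt_setl_other)
        have lenq: "len ?Gl e' = len ?H e'" using False by simp
        have c1: "continuous_on {0..len ?H e'} (\<lambda>u. \<psi> (edge_pt ?H e' u))" using pw e'H unfolding pwa_def by blast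
        have c2: "continuous_on {0..len ?Gl e'} (\<lambda>u. ?F (edge_pt ?Gl e' u))"
          unfolding lenq using continuous_on_cong[OF refl eq, of "{0..len ?H e'}"] c1 by simp
        have a2: "\<exists>\<alpha> \<beta>. \<forall>u\<in>{a..b}. ?F (edge_pt ?Gl e' u) = \<alpha> + \<beta> * u"
          if ab: "0 \<le> a \<and> a < b \<and> b \<le> len ?Gl e' \<and> (\<forall>c. a < c \<and> c < b \<longrightarrow> Inner e' c \<notin> {s,t})" for a b
        proof -
          obtain \<alpha> \<beta> where 1: "\<forall>u\<in>{a..b}. \<psi> (edge_pt ?H e' u) = \<alpha> + \<beta> * u"
            using pw e'H ab lenq unfolding pwa_def by metis
          show ?thesis
          proof (rule exI[of _ \<alpha>], rule exI[of _ \<beta>], rule ballI)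
            fix u assume u: "u \<in> {a..b}"
            then have "u \<in> {0..len ?H e'}" using ab lenq by auto
            then show "?F (edge_pt ?Gl e' u) = \<alpha> + \<beta> * u" using eq 1 u by simp
          qed
        qed
        show ?thesis using c2 a2 by blast
      qed
    qed
  next
    fix p assume p: "p \<in> points ?Gl"
    show "outflow ?Gl ?F p = (if p = s then -1 else 0) + (if p = t then 1 else 0)"
    proof (cases p)
      case (Vert v)
      then have v: "v \<in> verts G" using p by simp
      have "outflow ?Gl ?F (Vert v) = outflow ?H ?F (Vert v)
        + (if fst (ends G e) = v then (?F (Vert (snd (ends G e))) - ?F (Vert (fst (ends G e)))) / l else 0)
        + (if snd (ends G e) = v then (?F (Vert (fst (ends G e))) - ?F (Vert (snd (ends G e)))) / l else 0)"
        by (rule outflow_split_vert[OF ewf e l affe])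
      also have "outflow ?H ?F (Vert v) = outflow ?H \<psi> (Vert v)"
        using v by (intro outflow_cong[OF ewfH eqH]) auto
      finally have X: "outflow ?Gl ?F (Vert v) = outflow ?H \<psi> (Vert v)
        + (if fst (ends G e) = v then (\<psi> (Vert (snd (ends G e))) - \<psi> (Vert (fst (ends G e)))) / l else 0)
        + (if snd (ends G e) = v then (\<psi> (Vert (fst (ends G e))) - \<psi> (Vert (snd (ends G e)))) / l else 0)"
        unfolding eqH[OF PQ(1)] eqH[OF PQ(2)] .
      show ?thesis unfolding Vert X using vert[rule_format, OF v] .
    next
      case (Inner e' u)
      show ?thesis
      proof (cases "e' = e")
        case True
        have u: "0 < u" "u < l" using p Inner True by auto
        have aff3: "?F (edge_pt ?Gl e t') = ?F (Vert (fst (ends G e)))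
            + ((?F (Vert (snd (ends G e))) - ?F (Vert (fst (ends G e)))) / l) * t'"
          if "u - min u (l - u) \<le> t'" "t' \<le> u + min u (l - u)" for t'
        proof -
          have "0 \<le> t'" "t' \<le> l" using that u by (auto simp: min_def split: if_splits)
          then show ?thesis using affe by simp
        qed
        have "outflow ?Gl ?F p = 0" unfolding Inner True
          using aff3 u
          by (intro outflow_inner_affine[of e ?Gl u "min u (l - u)" _ "?F (Vert (fst (ends G e)))"
                "(?F (Vert (snd (ends G e))) - ?F (Vert (fst (ends G e)))) / l"]) (auto simp: e min_def)
        moreover have "p \<noteq> s" "p \<noteq> t" using s t Inner True by (auto simp: points_del)
        ultimately show ?thesis by simp
      next
        case False
        then have pH: "p \<in> points ?H" using p Inner by auto
        have "outflow ?Gl ?F p = outflow ?H ?F p" unfolding Inner using False by (rule outflow_split_inner)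
        also have "\<dots> = outflow ?H \<psi> p" using outflow_cong[OF ewfH eqH pH] .
        finally show ?thesis using inner pH Inner unfolding isInner_def by simp
      qed
    qed
  qed
qed

lemma vf_Vert: "v \<in> verts G \<Longrightarrow> vf G x y z (Vert v) = x v"
  unfolding vf_def by simp

lemma vf_vsrc: "p \<in> points G \<Longrightarrow> vf G x (Vert a) (Vert b) p = lin G x p"
  unfolding vf_def ttent_def by simp

lemma recip:
  assumes ewf: "ewf G" and y: "y \<in> points G" and z: "z \<in> points G"
    and Lx: "\<forall>v\<in>verts G. Lap G x v = bsrc G z v - bsrc G y v"
  shows "(\<Sum>v\<in>verts G. vf G x y z (Vert v) * Lap G h v) = lin G h z - lin G h y"
proof -
  have "(\<Sum>v\<in>verts G. vf G x y z (Vert v) * Lap G h v) = (\<Sum>v\<in>verts G. x v * Lap G h v)"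
    by (intro sum.cong refl) (simp add: vf_Vert)
  also have "\<dots> = (\<Sum>v\<in>verts G. h v * Lap G x v)" by (rule Lap_sym[OF ewf, symmetric])
  also have "\<dots> = (\<Sum>v\<in>verts G. h v * bsrc G z v - h v * bsrc G y v)"
  proof (intro sum.cong refl)
    fix v assume v: "v \<in> verts G"
    show "h v * Lap G x v = h v * bsrc G z v - h v * bsrc G y v"
      unfolding Lx[rule_format, OF v] by (simp add: right_diff_distrib)
  qed
  also have "\<dots> = lin G h z - lin G h y"
    by (simp add: sum_subtractf bsrc_interp[OF ewf z] bsrc_interp[OF ewf y])
  finally show ?thesis .
qed

lemma Lap_add: "Lap G (\<lambda>v. x v + y v) v = Lap G x v + Lap G y v"
proof -
  have d: "(a + b - (c + d)) / L = (a - c) / L + (b - d) / L" for a b c d L :: real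
    by (simp add: diff_divide_distrib add_divide_distrib)
  show ?thesis unfolding Lap_def d sum.distrib by simp
qed

lemma jfun_vf:
  assumes wf: "mgraph_wf G" and y: "y \<in> points G" and z: "z \<in> points G"
  obtains x where "is_voltage G y z (vf G x y z)" "\<forall>v\<in>verts G. Lap G x v = bsrc G z v - bsrc G y v"
    "\<And>p. jfun G z p y = vf G x y z p"
proof -
  obtain x where x1: "is_voltage G y z (vf G x y z)" and x2: "\<forall>v\<in>verts G. Lap G x v = bsrc G z v - bsrc G y v"
    using volt_exists[OF assms] by blast
  have x3: "\<And>p. jfun G z p y = vf G x y z p" using jfun_eq[OF wf z x1] .
  show ?thesis by (rule that[OF x1 x2 x3])
qed

lemma resist_nonneg:
  assumes wf: "mgraph_wf G" and a: "a \<in> verts G" and b: "b \<in> verts G"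
  shows "resist G (Vert a) (Vert b) \<ge> 0"
proof -
  have ewf: "ewf G" using wf by (rule wf_ewf)
  obtain x where x: "is_voltage G (Vert a) (Vert b) (vf G x (Vert a) (Vert b))"
     "\<forall>v\<in>verts G. Lap G x v = bsrc G (Vert b) v - bsrc G (Vert a) v"
     "\<And>p. jfun G (Vert b) p (Vert a) = vf G x (Vert a) (Vert b) p"
    using jfun_vf[OF wf, of "Vert a" "Vert b"] a b by auto
  have R: "resist G (Vert a) (Vert b) = x a" unfolding resist_def x(3) using vf_Vert[OF a] by simp
  have "(\<Sum>v\<in>verts G. vf G x (Vert a) (Vert b) (Vert v) * Lap G x v) = x b - x a"
    using recip[OF ewf _ _ x(2), of x] a b by simp
  moreover have "(\<Sum>v\<in>verts G. vf G x (Vert a) (Vert b) (Vert v) * Lap G x v) = (\<Sum>v\<in>verts G. x v * Lap G x v)"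
    by (intro sum.cong refl) (simp add: vf_Vert)
  moreover have "(\<Sum>v\<in>verts G. x v * Lap G x v) \<le> 0"
  proof -
    have "0 \<le> (\<Sum>e\<in>edges G. (x (snd (ends G e)) - x (fst (ends G e))) * (x (snd (ends G e)) - x (fst (ends G e))) / len G e)"
      using ewfD(3)[OF ewf] by (intro sum_nonneg divide_nonneg_pos) auto
    then show ?thesis unfolding Lap_pair[OF ewf] by simp
  qed
  moreover have "x b = 0" using x(1) vf_Vert[OF b] unfolding is_voltage_iff by simp
  ultimately show ?thesis using R by simp
qed

lemma jfun_sym_vert:
  assumes wf: "mgraph_wf G" and a: "a \<in> verts G" and b: "b \<in> verts G" and s: "s \<in> points G"
  shows "jfun G (Vert a) (Vert b) s = jfun G (Vert a) s (Vert b)"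
proof -
  have ewf: "ewf G" using wf by (rule wf_ewf)
  have A: "Vert a \<in> points G" and B: "Vert b \<in> points G" using a b by auto
  obtain xs where f: "is_voltage G s (Vert a) (vf G xs s (Vert a))"
    "\<forall>v\<in>verts G. Lap G xs v = bsrc G (Vert a) v - bsrc G s v"
    "\<And>p. jfun G (Vert a) p s = vf G xs s (Vert a) p"
    using jfun_vf[OF wf s A] by blast
  obtain xg where g: "is_voltage G (Vert b) (Vert a) (vf G xg (Vert b) (Vert a))"
    "\<forall>v\<in>verts G. Lap G xg v = bsrc G (Vert a) v - bsrc G (Vert b) v"
    "\<And>p. jfun G (Vert a) p (Vert b) = vf G xg (Vert b) (Vert a) p"
    using jfun_vf[OF wf B A] by blast
  define F where "F = vf G xs s (Vert a)"
  have Fa: "F (Vert a) = 0" using f(1) unfolding F_def is_voltage_iff by simp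
  have xga: "xg a = 0" using g(1) vf_Vert[OF a, of xg] unfolding is_voltage_iff by simp
  have "(\<Sum>v\<in>verts G. F (Vert v) * Lap G xg v) = lin G xg (Vert a) - lin G xg s"
    unfolding F_def by (rule recip[OF ewf s A f(2)])
  also have "\<dots> = - vf G xg (Vert b) (Vert a) s" using xga s by (simp add: vf_vsrc)
  finally have 1: "(\<Sum>v\<in>verts G. F (Vert v) * Lap G xg v) = - vf G xg (Vert b) (Vert a) s" .
  have "(\<Sum>v\<in>verts G. F (Vert v) * Lap G xg v)
      = (\<Sum>v\<in>verts G. F (Vert v) * bsrc G (Vert a) v - F (Vert v) * bsrc G (Vert b) v)"
  proof (intro sum.cong refl)
    fix v assume v: "v \<in> verts G"
    show "F (Vert v) * Lap G xg v = F (Vert v) * bsrc G (Vert a) v - F (Vert v) * bsrc G (Vert b) v"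
      unfolding g(2)[rule_format, OF v] by (simp add: right_diff_distrib)
  qed
  also have "\<dots> = F (Vert a) - F (Vert b)"
    using bsrc_interp[OF ewf A, of "\<lambda>v. F (Vert v)"] bsrc_interp[OF ewf B, of "\<lambda>v. F (Vert v)"]
    by (simp add: sum_subtractf)
  finally have 2: "(\<Sum>v\<in>verts G. F (Vert v) * Lap G xg v) = - F (Vert b)" using Fa by simp
  show ?thesis unfolding f(3) g(3) F_def[symmetric] using 1 2 by simp
qed

lemma nonbridge_resist:
  assumes wf: "mgraph_wf G" and e: "e \<in> edges G" and nb: "\<not> is_bridge G e" and l: "l > 0"
    and s: "s \<in> points (delete_edge G e)" and t: "t \<in> points (delete_edge G e)"
  shows "resist (set_length G e l) s t = resist (delete_edge G e) s t
     - (jfun (delete_edge G e) (Vert (fst (ends G e))) (Vert (snd (ends G e))) s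
        - jfun (delete_edge G e) (Vert (fst (ends G e))) (Vert (snd (ends G e))) t)\<^sup>2
       / (l + resist (delete_edge G e) (Vert (fst (ends G e))) (Vert (snd (ends G e))))"
proof -
  let ?H = "delete_edge G e" and ?Gl = "set_length G e l"
  define p0 where "p0 = fst (ends G e)"
  define q0 where "q0 = snd (ends G e)"
  have ewf: "ewf G" using wf by (rule wf_ewf)
  have wfH: "mgraph_wf ?H" using wf_del[OF wf e nb] .
  have ewfH: "ewf ?H" using wfH by (rule wf_ewf)
  have pq: "p0 \<in> verts G" "q0 \<in> verts G" unfolding p0_def q0_def using ewfD[OF ewf e] by auto
  have P: "Vert p0 \<in> points ?H" and Q: "Vert q0 \<in> points ?H" using pq by auto
  obtain x\<phi> where \<phi>: "is_voltage ?H s t (vf ?H x\<phi> s t)" "\<forall>v\<in>verts ?H. Lap ?H x\<phi> v = bsrc ?H t v - bsrc ?H s v"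
    "\<And>p. jfun ?H t p s = vf ?H x\<phi> s t p"
    using jfun_vf[OF wfH s t] by blast
  obtain xg where g: "is_voltage ?H (Vert q0) (Vert p0) (vf ?H xg (Vert q0) (Vert p0))"
    "\<forall>v\<in>verts ?H. Lap ?H xg v = bsrc ?H (Vert p0) v - bsrc ?H (Vert q0) v"
    "\<And>p. jfun ?H (Vert p0) p (Vert q0) = vf ?H xg (Vert q0) (Vert p0) p"
    using jfun_vf[OF wfH Q P] by blast
  obtain xr where r: "is_voltage ?H (Vert p0) (Vert q0) (vf ?H xr (Vert p0) (Vert q0))"
    "\<forall>v\<in>verts ?H. Lap ?H xr v = bsrc ?H (Vert q0) v - bsrc ?H (Vert p0) v"
    "\<And>p. jfun ?H (Vert q0) p (Vert p0) = vf ?H xr (Vert p0) (Vert q0) p"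
    using jfun_vf[OF wfH P Q] by blast
  define \<phi> where "\<phi> = vf ?H x\<phi> s t"
  define g where "g = vf ?H xg (Vert q0) (Vert p0)"
  define R where "R = resist ?H (Vert p0) (Vert q0)"
  have gP: "g (Vert p0) = 0" using g(1) unfolding g_def is_voltage_iff by simp
  have \<phi>t: "\<phi> t = 0" using \<phi>(1) unfolding \<phi>_def is_voltage_iff by simp
  have Rnn: "R \<ge> 0" unfolding R_def using resist_nonneg[OF wfH] pq by simp
  have RgQ: "R = g (Vert q0)"
  proof -
    have "\<forall>v\<in>verts ?H. Lap ?H (\<lambda>v. xr v + xg v) v = 0"
    proof
      fix v assume v: "v \<in> verts ?H"
      show "Lap ?H (\<lambda>v. xr v + xg v) v = 0"
        unfolding Lap_add r(2)[rule_format, OF v] g(2)[rule_format, OF v] by simp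
    qed
    then obtain k where k: "\<forall>v\<in>verts ?H. xr v + xg v = k" using max_principle[OF wfH] by blast
    have "xr q0 = 0" using r(1) vf_Vert[of q0 ?H] pq unfolding is_voltage_iff by simp
    moreover have "xg p0 = 0" using gP vf_Vert[of p0 ?H] pq unfolding g_def by simp
    moreover have "xr p0 + xg p0 = k" "xr q0 + xg q0 = k" using k pq by auto
    ultimately have "xr p0 = xg q0" by linarith
    moreover have "R = xr p0" unfolding R_def resist_def r(3) using vf_Vert[of p0 ?H] pq by simp
    moreover have "g (Vert q0) = xg q0" unfolding g_def using vf_Vert[of q0 ?H] pq by simp
    ultimately show ?thesis by simp
  qed
  have recipr: "\<phi> (Vert p0) - \<phi> (Vert q0) = g t - g s"
  proof -
    have "(\<Sum>v\<in>verts ?H. \<phi> (Vert v) * Lap ?H xg v) = lin ?H xg t - lin ?H xg s"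
      unfolding \<phi>_def using recip[OF ewfH s t \<phi>(2)] .
    also have "\<dots> = g t - g s" unfolding g_def using s t by (simp add: vf_vsrc)
    finally have 1: "(\<Sum>v\<in>verts ?H. \<phi> (Vert v) * Lap ?H xg v) = g t - g s" .
    have "(\<Sum>v\<in>verts ?H. \<phi> (Vert v) * Lap ?H xg v)
        = (\<Sum>v\<in>verts ?H. \<phi> (Vert v) * bsrc ?H (Vert p0) v - \<phi> (Vert v) * bsrc ?H (Vert q0) v)"
    proof (intro sum.cong refl)
      fix v assume v: "v \<in> verts ?H"
      show "\<phi> (Vert v) * Lap ?H xg v = \<phi> (Vert v) * bsrc ?H (Vert p0) v - \<phi> (Vert v) * bsrc ?H (Vert q0) v"
        unfolding g(2)[rule_format, OF v] by (simp add: right_diff_distrib)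
    qed
    also have "\<dots> = \<phi> (Vert p0) - \<phi> (Vert q0)"
      using bsrc_interp[OF ewfH P, of "\<lambda>v. \<phi> (Vert v)"] bsrc_interp[OF ewfH Q, of "\<lambda>v. \<phi> (Vert v)"]
      by (simp add: sum_subtractf)
    finally show ?thesis using 1 by simp
  qed
  define I where "I = (\<phi> (Vert p0) - \<phi> (Vert q0)) / (l + R)"
  have lR: "l + R > 0" using l Rnn by simp
  have II: "I * (l + R) = \<phi> (Vert p0) - \<phi> (Vert q0)" unfolding I_def using lR by simp
  define \<psi> where "\<psi> x = 1 * \<phi> x + I * g x + (- I * g t)" for x
  have p\<phi>: "pwa ?H {s,t} \<phi>" using \<phi>(1) unfolding \<phi>_def is_voltage_iff by simp
  have pg0: "pwa ?H {Vert q0, Vert p0} g" using g(1) unfolding g_def is_voltage_iff by simp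
  have pg: "pwa ?H {s,t} g" by (rule pwa_mono[OF pg0]) simp
  have p\<psi>: "pwa ?H {s,t} \<psi>" unfolding \<psi>_def[abs_def] by (rule pwa_lin[OF p\<phi> pg])
  have out\<psi>: "outflow ?H \<psi> p = outflow ?H \<phi> p + I * outflow ?H g p" if "p \<in> points ?H" for p
    using outflow_lin[OF ewfH p\<phi> pg _ that, of 1 I "- I * g t"] unfolding \<psi>_def[abs_def] by simp
  have o\<phi>: "outflow ?H \<phi> p = (if p = s then -1 else 0) + (if p = t then 1 else 0)" if "p \<in> points ?H" for p
    using \<phi>(1) that unfolding \<phi>_def is_voltage_iff by simp
  have og: "outflow ?H g p = (if p = Vert q0 then -1 else 0) + (if p = Vert p0 then 1 else 0)" if "p \<in> points ?H" for p
    using g(1) that unfolding g_def is_voltage_iff by simp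
  have dQP: "\<psi> (Vert q0) - \<psi> (Vert p0) = - I * l"
  proof -
    have "\<psi> (Vert q0) - \<psi> (Vert p0) = - (\<phi> (Vert p0) - \<phi> (Vert q0)) + I * R"
      unfolding \<psi>_def using gP RgQ by simp
    also have "\<dots> = - I * l" using II by (simp add: algebra_simps)
    finally show ?thesis .
  qed
  have volt: "is_voltage ?Gl s t (ext G e l \<psi>)"
  proof (rule ext_volt[OF wf e l s t p\<psi>])
    show "\<psi> t = 0" unfolding \<psi>_def using \<phi>t by simp
    show "\<forall>p\<in>points ?H. isInner p \<longrightarrow> outflow ?H \<psi> p = (if p = s then -1 else 0) + (if p = t then 1 else 0)"
    proof (intro ballI impI)
      fix p assume p: "p \<in> points ?H" and ip: "isInner p"
      then have "p \<noteq> Vert q0" "p \<noteq> Vert p0" unfolding isInner_def by auto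
      then show "outflow ?H \<psi> p = (if p = s then -1 else 0) + (if p = t then 1 else 0)"
        using out\<psi>[OF p] o\<phi>[OF p] og[OF p] by simp
    qed
    show "\<forall>v\<in>verts G. outflow ?H \<psi> (Vert v)
        + (if fst (ends G e) = v then (\<psi> (Vert (snd (ends G e))) - \<psi> (Vert (fst (ends G e)))) / l else 0)
        + (if snd (ends G e) = v then (\<psi> (Vert (fst (ends G e))) - \<psi> (Vert (snd (ends G e)))) / l else 0)
        = (if Vert v = s then -1 else 0) + (if Vert v = t then 1 else 0)"
    proof
      fix v assume v: "v \<in> verts G"
      have a: "(\<psi> (Vert q0) - \<psi> (Vert p0)) / l = - I" using dQP l by simp
      have b: "(\<psi> (Vert p0) - \<psi> (Vert q0)) / l = I" using dQP l by (simp add: field_simps)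
      show "outflow ?H \<psi> (Vert v)
        + (if fst (ends G e) = v then (\<psi> (Vert (snd (ends G e))) - \<psi> (Vert (fst (ends G e)))) / l else 0)
        + (if snd (ends G e) = v then (\<psi> (Vert (fst (ends G e))) - \<psi> (Vert (snd (ends G e)))) / l else 0)
        = (if Vert v = s then -1 else 0) + (if Vert v = t then 1 else 0)"
        unfolding p0_def[symmetric] q0_def[symmetric] a b
        using out\<psi>[of "Vert v"] o\<phi>[of "Vert v"] og[of "Vert v"] v
        by (cases "p0 = v"; cases "q0 = v") (simp_all add: algebra_simps)
    qed
  qed
  have wfGl: "mgraph_wf ?Gl" using wf_setl[OF wf l] .
  have tGl: "t \<in> points ?Gl" using t points_setl[OF e] by auto
  have sH: "ext G e l \<psi> s = \<psi> s" using s unfolding ext_def by simp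
  have "resist ?Gl s t = \<psi> s" unfolding resist_def using jfun_eq[OF wfGl tGl volt] sH by simp
  also have "\<dots> = \<phi> s + I * (g s - g t)" unfolding \<psi>_def by (simp add: algebra_simps)
  also have "\<dots> = \<phi> s - (g s - g t)\<^sup>2 / (l + R)"
    unfolding I_def recipr using lR by (simp add: field_simps power2_eq_square)
  finally have fin: "resist ?Gl s t = \<phi> s - (g s - g t)\<^sup>2 / (l + R)" .
  have rs: "resist ?H s t = \<phi> s" unfolding resist_def \<phi>(3) \<phi>_def ..
  have jg: "jfun ?H (Vert p0) (Vert q0) x = g x" if "x \<in> points ?H" for x
  proof -
    have "jfun ?H (Vert p0) (Vert q0) x = jfun ?H (Vert p0) x (Vert q0)"
      using jfun_sym_vert[OF wfH _ _ that, of p0 q0] pq by simp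
    then show ?thesis unfolding g(3) g_def .
  qed
  show ?thesis unfolding p0_def[symmetric] q0_def[symmetric] R_def[symmetric] rs jg[OF s] jg[OF t] by (rule fin)
qed

lemma adj_sym: "adj G u w \<Longrightarrow> adj G w u"
  unfolding adj_def by auto

lemma vconn_refl: "vconn G u u"
  unfolding vconn_def by simp

lemma vconn_sym: "vconn G u w \<Longrightarrow> vconn G w u"
  unfolding vconn_def
proof (induction rule: rtranclp_induct)
  case base
  then show ?case by simp
next
  case (step y z)
  then show ?case using adj_sym[OF step(2)] by (meson converse_rtranclp_into_rtranclp)
qed

lemma vconn_trans: "vconn G u w \<Longrightarrow> vconn G w x \<Longrightarrow> vconn G u x"
  unfolding vconn_def by (rule rtranclp_trans)

lemma vconn_step: "vconn G u w \<Longrightarrow> adj G w x \<Longrightarrow> vconn G u x"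
  unfolding vconn_def by (rule rtranclp.rtrancl_into_rtrancl)

lemma adj_del_cases:
  assumes "adj G a b"
  shows "adj (delete_edge G e) a b \<or> (a = fst (ends G e) \<and> b = snd (ends G e)) \<or> (a = snd (ends G e) \<and> b = fst (ends G e))"
proof -
  obtain e' where e': "e' \<in> edges G" "ends G e' = (a, b) \<or> ends G e' = (b, a)" using assms unfolding adj_def by auto
  show ?thesis
  proof (cases "e' = e")
    case True
    then show ?thesis using e' by auto
  next
    case False
    then have "adj (delete_edge G e) a b" using e' unfolding adj_def by auto
    then show ?thesis by simp
  qed
qed

lemma bridge_not_conn:
  assumes wf: "mgraph_wf G" and e: "e \<in> edges G" and br: "is_bridge G e"
  shows "\<not> vconn (delete_edge G e) (fst (ends G e)) (snd (ends G e))"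
proof
  let ?H = "delete_edge G e"
  assume pq: "vconn ?H (fst (ends G e)) (snd (ends G e))"
  have "vconn ?H u w" if "(adj G)\<^sup>*\<^sup>* u w" for u w
    using that
  proof (induction rule: rtranclp_induct)
    case base
    then show ?case by (rule vconn_refl)
  next
    case (step y z)
    from adj_del_cases[OF step(2), of e] show ?case
    proof (elim disjE conjE)
      assume "adj ?H y z" then show ?thesis by (rule vconn_step[OF step(3)])
    next
      assume "y = fst (ends G e)" "z = snd (ends G e)"
      then show ?thesis using step(3) pq vconn_trans by metis
    next
      assume "y = snd (ends G e)" "z = fst (ends G e)"
      then show ?thesis using step(3) vconn_sym[OF pq] vconn_trans by metis
    qed
  qed
  then have "graph_connected ?H" using wf unfolding mgraph_wf_def graph_connected_def vconn_def by simp
  then show False using br unfolding is_bridge_def by simp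
qed

lemma bridge_sides:
  assumes wf: "mgraph_wf G" and e: "e \<in> edges G" and v: "v \<in> verts G"
  shows "vconn (delete_edge G e) (fst (ends G e)) v \<or> vconn (delete_edge G e) (snd (ends G e)) v"
proof -
  let ?H = "delete_edge G e"
  have p: "fst (ends G e) \<in> verts G" using ewfD[OF wf_ewf[OF wf] e] by simp
  have "(adj G)\<^sup>*\<^sup>* (fst (ends G e)) v" using wf p v unfolding mgraph_wf_def graph_connected_def vconn_def by blast
  then show ?thesis
  proof (induction rule: rtranclp_induct)
    case base
    show ?case by (rule disjI1, rule vconn_refl)
  next
    case (step y z)
    from adj_del_cases[OF step(2), of e] show ?case
    proof (elim disjE conjE)
      assume a: "adj ?H y z"
      from step(3) show ?thesis
      proof
        assume "vconn ?H (fst (ends G e)) y" then show ?thesis by (rule disjI1[OF vconn_step[OF _ a]])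
      next
        assume "vconn ?H (snd (ends G e)) y" then show ?thesis by (rule disjI2[OF vconn_step[OF _ a]])
      qed
    next
      assume "y = fst (ends G e)" "z = snd (ends G e)"
      then show ?thesis using vconn_refl[of ?H z] by (intro disjI2) simp
    next
      assume "y = snd (ends G e)" "z = fst (ends G e)"
      then show ?thesis using vconn_refl[of ?H z] by (intro disjI1) simp
    qed
  qed
qed

lemma Lap_split:
  assumes ewf: "ewf G" and e: "e \<in> edges G"
  shows "Lap (set_length G e l) x v = Lap (delete_edge G e) x v
     + (if fst (ends G e) = v then (x (snd (ends G e)) - x (fst (ends G e))) / l else 0)
     + (if snd (ends G e) = v then (x (fst (ends G e)) - x (snd (ends G e))) / l else 0)"
proof -
  have fE: "finite (edges G)" using ewf_fin[OF ewf] by simp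
  have o1: "(\<Sum>e'\<in>{e'\<in>edges G - {e}. fst (ends G e') = v}. (x (snd (ends G e')) - x v) / ((len G)(e := l)) e')
    = (\<Sum>e'\<in>{e'\<in>edges G - {e}. fst (ends G e') = v}. (x (snd (ends G e')) - x v) / len G e')"
    by (intro sum.cong refl) simp
  have o2: "(\<Sum>e'\<in>{e'\<in>edges G - {e}. snd (ends G e') = v}. (x (fst (ends G e')) - x v) / ((len G)(e := l)) e')
    = (\<Sum>e'\<in>{e'\<in>edges G - {e}. snd (ends G e') = v}. (x (fst (ends G e')) - x v) / len G e')"
    by (intro sum.cong refl) simp
  have a: "(if fst (ends G e) = v then (x (snd (ends G e)) - x v) / ((len G)(e := l)) e else 0)
     = (if fst (ends G e) = v then (x (snd (ends G e)) - x (fst (ends G e))) / l else 0)" by auto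
  have b: "(if snd (ends G e) = v then (x (fst (ends G e)) - x v) / ((len G)(e := l)) e else 0)
     = (if snd (ends G e) = v then (x (fst (ends G e)) - x (snd (ends G e))) / l else 0)" by auto
  show ?thesis
    unfolding Lap_def setl_simps del_simps
    apply (subst sum_split_e[OF fE e])
    apply (subst sum_split_e[OF fE e])
    unfolding o1 o2 a b by simp
qed

lemma lin_rep:
  assumes ewf: "ewf G" and e: "e \<in> edges G"
    and chi: "\<forall>e'\<in>edges G - {e}. x (fst (ends G e')) = x (snd (ends G e'))"
    and p: "p \<in> points (delete_edge G e)"
  shows "lin (set_length G e l) x p = x (rep (delete_edge G e) p)"
    "lin (delete_edge G e) x p = x (rep (delete_edge G e) p)"
proof -
  have "lin (set_length G e l) x p = x (rep (delete_edge G e) p) \<and> lin (delete_edge G e) x p = x (rep (delete_edge G e) p)"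
  proof (cases p)
    case (Vert v)
    then show ?thesis by simp
  next
    case (Inner e' u)
    then have "e' \<in> edges G - {e}" using p by auto
    then show ?thesis using chi Inner unfolding lin_def by auto
  qed
  then show "lin (set_length G e l) x p = x (rep (delete_edge G e) p)"
    "lin (delete_edge G e) x p = x (rep (delete_edge G e) p)" by auto
qed

lemma rep_verts: "ewf G \<Longrightarrow> p \<in> points G \<Longrightarrow> rep G p \<in> verts G"
  by (cases p) (auto dest: ewfD)

lemma bridge_resist:
  assumes wf: "mgraph_wf G" and e: "e \<in> edges G" and br: "is_bridge G e" and L': "L' > 0"
    and s: "s \<in> points (delete_edge G e)" and t: "t \<in> points (delete_edge G e)"
  shows "resist G s t = resist (set_length G e L') s t
     + (len G e - L') * (if same_component (delete_edge G e) s t then 0 else 1)"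
proof -
  let ?H = "delete_edge G e" and ?G' = "set_length G e L'"
  define p0 where "p0 = fst (ends G e)"
  define q0 where "q0 = snd (ends G e)"
  define L where "L = len G e"
  have ewf: "ewf G" using wf by (rule wf_ewf)
  have ewfH: "ewf ?H" using ewf by (rule ewf_del)
  have L0: "L > 0" unfolding L_def using ewfD[OF ewf e] by simp
  have wf': "mgraph_wf ?G'" using wf_setl[OF wf L'] .
  have ewf': "ewf ?G'" using wf' by (rule wf_ewf)
  have pq: "p0 \<in> verts G" "q0 \<in> verts G" unfolding p0_def q0_def using ewfD[OF ewf e] by auto
  have s': "s \<in> points ?G'" and t': "t \<in> points ?G'" using s t points_setl[OF e] by auto
  have nc: "\<not> vconn ?H p0 q0" unfolding p0_def q0_def by (rule bridge_not_conn[OF wf e br])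
  define \<chi> where "\<chi> v = (if vconn ?H p0 v then 1 else 0 :: real)" for v
  have \<chi>p: "\<chi> p0 = 1" unfolding \<chi>_def by (simp add: vconn_refl)
  have \<chi>q: "\<chi> q0 = 0" unfolding \<chi>_def using nc by simp
  have \<chi>e: "\<forall>e'\<in>edges G - {e}. \<chi> (fst (ends G e')) = \<chi> (snd (ends G e'))"
  proof
    fix e' assume e': "e' \<in> edges G - {e}"
    then have a: "adj ?H (fst (ends G e')) (snd (ends G e'))" unfolding adj_def by auto
    have "vconn ?H p0 (fst (ends G e')) \<longleftrightarrow> vconn ?H p0 (snd (ends G e'))"
      using vconn_step[OF _ a] vconn_step[OF _ adj_sym[OF a]] by blast
    then show "\<chi> (fst (ends G e')) = \<chi> (snd (ends G e'))" unfolding \<chi>_def by simp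
  qed
  have LapH: "Lap ?H \<chi> v = 0" for v
    unfolding Lap_def using \<chi>e by (auto intro!: sum.neutral)
  have LapG': "Lap ?G' \<chi> v = (if p0 = v then (\<chi> q0 - \<chi> p0) / L' else 0) + (if q0 = v then (\<chi> p0 - \<chi> q0) / L' else 0)" for v
  proof -
    have "Lap ?G' \<chi> v = Lap ?H \<chi> v + (if p0 = v then (\<chi> q0 - \<chi> p0) / L' else 0) + (if q0 = v then (\<chi> p0 - \<chi> q0) / L' else 0)"
      by (rule Lap_split[OF ewf e, of L' \<chi> v, unfolded p0_def[symmetric] q0_def[symmetric]])
    then show ?thesis unfolding LapH by (simp only: add_0_left)
  qed
  define cs where "cs = \<chi> (rep ?H s)"
  define ct where "ct = \<chi> (rep ?H t)"
  have linG's: "lin ?G' \<chi> s = cs" and linG't: "lin ?G' \<chi> t = ct"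
    unfolding cs_def ct_def using lin_rep(1)[OF ewf e \<chi>e] s t by auto
  have linH: "lin ?H \<chi> p = \<chi> (rep ?H p)" if "p \<in> points ?H" for p using lin_rep(2)[OF ewf e \<chi>e that] .
  obtain x' where f': "is_voltage ?G' s t (vf ?G' x' s t)" "\<forall>v\<in>verts ?G'. Lap ?G' x' v = bsrc ?G' t v - bsrc ?G' s v"
    "\<And>p. jfun ?G' t p s = vf ?G' x' s t p"
    using jfun_vf[OF wf' s' t'] by blast
  define f where "f = vf ?G' x' s t"
  define I where "I = (f (Vert p0) - f (Vert q0)) / L'"
  have recipr: "(\<Sum>v\<in>verts ?G'. f (Vert v) * Lap ?G' \<chi> v) = ct - cs"
    unfolding f_def using recip[OF ewf' s' t' f'(2), of \<chi>] linG's linG't by simp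
  have "(\<Sum>v\<in>verts ?G'. f (Vert v) * Lap ?G' \<chi> v)
      = (\<Sum>v\<in>verts G. (if v = p0 then - f (Vert p0) / L' else 0) + (if v = q0 then f (Vert q0) / L' else 0))"
    unfolding LapG' \<chi>p \<chi>q by (intro sum.cong) (auto simp: algebra_simps)
  also have "\<dots> = - I" using pq ewf_fin[OF ewf] L' unfolding I_def by (simp add: sum.distrib field_simps)
  finally have Ival: "I = cs - ct" using recipr by simp
  have pf: "pwa ?G' {s,t} f" using f'(1) unfolding f_def is_voltage_iff by simp
  have noS: "\<forall>c. Inner e c \<notin> {s,t}" using s t by (auto simp: points_del)
  have affe: "f (edge_pt ?G' e u) = f (Vert p0) + (f (Vert q0) - f (Vert p0)) * u / L'" if "0 \<le> u" "u \<le> L'" for u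
    using pwa_edge_affine[OF pf _ noS, of u] e L' that unfolding p0_def q0_def by simp
  have pfH: "pwa ?H {s,t} f" using pwa_restrict[OF pf] .
  have of': "outflow ?G' f p = (if p = s then -1 else 0) + (if p = t then 1 else 0)" if "p \<in> points ?G'" for p
    using f'(1) that unfolding f_def is_voltage_iff by simp
  have ofv: "outflow ?H f (Vert v) = (if Vert v = s then -1 else 0) + (if Vert v = t then 1 else 0)
      - (if p0 = v then (f (Vert q0) - f (Vert p0)) / L' else 0) - (if q0 = v then (f (Vert p0) - f (Vert q0)) / L' else 0)"
    if v: "v \<in> verts G" for v
    using outflow_split_vert[OF ewf e L' affe[unfolded p0_def q0_def], of v] of'[of "Vert v"] v
    unfolding p0_def[symmetric] q0_def[symmetric] by simp
  have ofi: "outflow ?H f p = (if p = s then -1 else 0) + (if p = t then 1 else 0)"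
    if p: "p \<in> points ?H" "isInner p" for p
  proof -
    obtain e' u where pe: "p = Inner e' u" using p(2) unfolding isInner_def by (auto split: pt.splits)
    then have ne: "e' \<noteq> e" using p(1) by (auto simp: points_del)
    have "p \<in> points ?G'" using p(1) points_setl[OF e] by auto
    then show ?thesis using of'[of p] outflow_split_inner[OF ne, of G L' f u] pe by simp
  qed
  define \<kappa> where "\<kappa> = I * (L - L')"
  define \<psi> where "\<psi> x = 1 * f x + \<kappa> * lin ?H \<chi> x + (- \<kappa> * ct)" for x
  have p\<psi>: "pwa ?H {s,t} \<psi>" unfolding \<psi>_def[abs_def] by (rule pwa_lin[OF pfH lin_pwa[OF ewfH]])
  have o\<psi>: "outflow ?H \<psi> p = outflow ?H f p" if p: "p \<in> points ?H" for p
  proof -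
    have "outflow ?H \<psi> p = outflow ?H f p + \<kappa> * outflow ?H (lin ?H \<chi>) p"
      using outflow_lin[OF ewfH pfH lin_pwa[OF ewfH, of "{s,t}" \<chi>] _ p, where a=1 and b=\<kappa> and k="- \<kappa> * ct"] unfolding \<psi>_def[abs_def] by simp
    also have "outflow ?H (lin ?H \<chi>) p = 0" using lin_outflow[OF ewfH p] LapH by (simp split: pt.split)
    finally show ?thesis by simp
  qed
  have \<psi>t: "\<psi> t = 0" unfolding \<psi>_def using linH[OF t] f'(1) unfolding ct_def f_def is_voltage_iff by simp
  have \<psi>P: "\<psi> (Vert p0) = f (Vert p0) + \<kappa> - \<kappa> * ct" unfolding \<psi>_def using \<chi>p by simp
  have \<psi>Q: "\<psi> (Vert q0) = f (Vert q0) - \<kappa> * ct" unfolding \<psi>_def using \<chi>q by simp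
  have fPQ: "f (Vert p0) - f (Vert q0) = I * L'" unfolding I_def using L' by simp
  have volt: "is_voltage G s t (ext G e L \<psi>)"
  proof -
    have "is_voltage (set_length G e L) s t (ext G e L \<psi>)"
    proof (rule ext_volt[OF wf e L0 s t p\<psi> \<psi>t])
      show "\<forall>p\<in>points ?H. isInner p \<longrightarrow> outflow ?H \<psi> p = (if p = s then -1 else 0) + (if p = t then 1 else 0)"
        using o\<psi> ofi by simp
      show "\<forall>v\<in>verts G. outflow ?H \<psi> (Vert v)
        + (if fst (ends G e) = v then (\<psi> (Vert (snd (ends G e))) - \<psi> (Vert (fst (ends G e)))) / L else 0)
        + (if snd (ends G e) = v then (\<psi> (Vert (fst (ends G e))) - \<psi> (Vert (snd (ends G e)))) / L else 0)
        = (if Vert v = s then -1 else 0) + (if Vert v = t then 1 else 0)"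
      proof
        fix v assume v: "v \<in> verts G"
        have a: "(\<psi> (Vert q0) - \<psi> (Vert p0)) / L = - I" unfolding \<psi>P \<psi>Q \<kappa>_def using fPQ L0
          by (simp add: field_simps)
        have b: "(\<psi> (Vert p0) - \<psi> (Vert q0)) / L = I" unfolding \<psi>P \<psi>Q \<kappa>_def using fPQ L0
          by (simp add: field_simps)
        have c: "(f (Vert q0) - f (Vert p0)) / L' = - I" using fPQ L' by (simp add: field_simps)
        have d: "(f (Vert p0) - f (Vert q0)) / L' = I" using fPQ L' by (simp add: field_simps)
        have "outflow ?H \<psi> (Vert v) = (if Vert v = s then -1 else 0) + (if Vert v = t then 1 else 0)
           - (if p0 = v then - I else 0) - (if q0 = v then I else 0)"
          using o\<psi>[of "Vert v"] ofv[OF v] v unfolding c d by simp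
        then show "outflow ?H \<psi> (Vert v)
          + (if fst (ends G e) = v then (\<psi> (Vert (snd (ends G e))) - \<psi> (Vert (fst (ends G e)))) / L else 0)
          + (if snd (ends G e) = v then (\<psi> (Vert (fst (ends G e))) - \<psi> (Vert (snd (ends G e)))) / L else 0)
          = (if Vert v = s then -1 else 0) + (if Vert v = t then 1 else 0)"
          unfolding p0_def[symmetric] q0_def[symmetric] a b by simp
      qed
    qed
    then show ?thesis unfolding L_def setl_same .
  qed
  have tG: "t \<in> points G" using t by (simp add: points_del)
  have "resist G s t = ext G e L \<psi> s" unfolding resist_def using jfun_eq[OF wf tG volt] .
  also have "\<dots> = \<psi> s" using s unfolding ext_def by simp
  also have "\<dots> = f s + \<kappa> * (cs - ct)" unfolding \<psi>_def using linH[OF s] unfolding cs_def by (simp add: algebra_simps)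
  also have "f s = resist ?G' s t" unfolding resist_def f'(3) f_def ..
  finally have r: "resist G s t = resist ?G' s t + (L - L') * (cs - ct)\<^sup>2"
    unfolding \<kappa>_def Ival by (simp add: power2_eq_square algebra_simps)
  have rs: "rep ?H s \<in> verts G" "rep ?H t \<in> verts G" using rep_verts[OF ewfH s] rep_verts[OF ewfH t] by auto
  have sq: "(cs - ct)\<^sup>2 = (if same_component ?H s t then 0 else 1)"
  proof (cases "same_component ?H s t")
    case True
    then have st: "vconn ?H (rep ?H s) (rep ?H t)" unfolding same_component_def .
    have "vconn ?H p0 (rep ?H s) \<longleftrightarrow> vconn ?H p0 (rep ?H t)"
      using vconn_trans[OF _ st] vconn_trans[OF _ vconn_sym[OF st]] by blast
    then have "cs = ct" unfolding cs_def ct_def \<chi>_def by simp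
    then show ?thesis using True by simp
  next
    case False
    then have nst: "\<not> vconn ?H (rep ?H s) (rep ?H t)" unfolding same_component_def .
    have side: "vconn ?H p0 w \<or> vconn ?H q0 w" if "w \<in> verts G" for w
      using bridge_sides[OF wf e that] unfolding p0_def q0_def .
    have excl: "\<not> (vconn ?H p0 w \<and> vconn ?H q0 w)" for w
      using nc vconn_trans vconn_sym by metis
    have "(vconn ?H p0 (rep ?H s) \<and> vconn ?H q0 (rep ?H t)) \<or> (vconn ?H q0 (rep ?H s) \<and> vconn ?H p0 (rep ?H t))"
    proof -
      have n1: "\<not> (vconn ?H p0 (rep ?H s) \<and> vconn ?H p0 (rep ?H t))"
        using nst vconn_trans vconn_sym by metis
      have n2: "\<not> (vconn ?H q0 (rep ?H s) \<and> vconn ?H q0 (rep ?H t))"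
        using nst vconn_trans vconn_sym by metis
      show ?thesis using side[OF rs(1)] side[OF rs(2)] n1 n2 by blast
    qed
    then have "(cs = 1 \<and> ct = 0) \<or> (cs = 0 \<and> ct = 1)"
      unfolding cs_def ct_def \<chi>_def using excl by auto
    then show ?thesis using False by auto
  qed
  show ?thesis using r sq unfolding L_def by simp
qed

theorem theorem3p10:
  fixes G :: "('v,'e) mgraph" and e :: 'e and L' :: real and s t :: "('v,'e) pt"
  assumes "mgraph_wf G"
    and "e \<in> edges G"
    and "L' > 0"
    and "s \<in> points (delete_edge G e)" and "t \<in> points (delete_edge G e)"
  shows "let p = Vert (fst (ends G e)); q = Vert (snd (ends G e)); L = len G e;
             G' = set_length G e L'; H = delete_edge G e; R = resist H p q
         in (\<not> is_bridge G e \<longrightarrow>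
               resist G s t = resist G' s t
                 + (L - L') / ((L + R) * (L' + R)) * (jfun H p q s - jfun H p q t)\<^sup>2)
          \<and> (is_bridge G e \<longrightarrow>
               (same_component H s t \<longrightarrow> resist G s t = resist G' s t) \<and>
               (\<not> same_component H s t \<longrightarrow> resist G s t = resist G' s t + L - L'))
          \<and> (\<not> is_bridge G e \<and> L > L' \<longrightarrow>
               resist G s t \<ge> resist G' s t \<and>
               (resist G s t = resist G' s t \<longleftrightarrow> jfun H p q s = jfun H p q t))
          \<and> (is_bridge G e \<and> L > L' \<longrightarrow>
               resist G s t \<ge> resist G' s t \<and>
               (resist G s t = resist G' s t \<longleftrightarrow> same_component H s t))"
proof -
  note wf = assms(1) and e = assms(2) and L' = assms(3) and s = assms(4) and t = assms(5)
  define P :: "('v,'e) pt" where "P = Vert (fst (ends G e))"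
  define Q :: "('v,'e) pt" where "Q = Vert (snd (ends G e))"
  define L where "L = len G e"
  define G' where "G' = set_length G e L'"
  define H where "H = delete_edge G e"
  define R where "R = resist H P Q"
  define D where "D = jfun H P Q s - jfun H P Q t"
  have ewf: "ewf G" using wf by (rule wf_ewf)
  have L0: "L > 0" unfolding L_def using ewfD[OF ewf e] by simp
  have NB: "resist G s t = resist G' s t + (L - L') / ((L + R) * (L' + R)) * D\<^sup>2 \<and> R \<ge> 0"
    if nb: "\<not> is_bridge G e"
  proof -
    have wfH: "mgraph_wf H" unfolding H_def using wf_del[OF wf e nb] .
    have Rnn: "R \<ge> 0" unfolding R_def P_def Q_def H_def
      using resist_nonneg[OF wfH[unfolded H_def]] ewfD[OF ewf e] by simp
    have A: "resist G s t = resist H s t - D\<^sup>2 / (L + R)"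
      using nonbridge_resist[OF wf e nb L0 s t] unfolding setl_same L_def
      unfolding H_def[symmetric] P_def[symmetric] Q_def[symmetric] R_def[symmetric] D_def[symmetric] L_def[symmetric] .
    have B: "resist G' s t = resist H s t - D\<^sup>2 / (L' + R)"
      using nonbridge_resist[OF wf e nb L' s t]
      unfolding G'_def[symmetric] H_def[symmetric] P_def[symmetric] Q_def[symmetric] R_def[symmetric] D_def[symmetric] .
    have pos: "L + R > 0" "L' + R > 0" using L0 L' Rnn by auto
    have f1: "(L - L') / ((L + R) * (L' + R)) = 1 / (L' + R) - 1 / (L + R)"
      using pos by (simp add: field_simps)
    have "resist G s t = resist G' s t + (1 / (L' + R) - 1 / (L + R)) * D\<^sup>2"
      unfolding A B by (simp add: left_diff_distrib)
    then have "resist G s t = resist G' s t + (L - L') / ((L + R) * (L' + R)) * D\<^sup>2"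
      unfolding f1 .
    then show ?thesis using Rnn by simp
  qed
  have BR: "resist G s t = resist G' s t + (L - L') * (if same_component H s t then 0 else 1)"
    if br: "is_bridge G e"
    using bridge_resist[OF wf e br L' s t] unfolding G'_def H_def L_def .
  have part1: "\<not> is_bridge G e \<longrightarrow> resist G s t = resist G' s t + (L - L') / ((L + R) * (L' + R)) * D\<^sup>2"
    using NB by blast
  have part2: "is_bridge G e \<longrightarrow>
               (same_component H s t \<longrightarrow> resist G s t = resist G' s t) \<and>
               (\<not> same_component H s t \<longrightarrow> resist G s t = resist G' s t + L - L')"
    using BR by simp
  have part3: "\<not> is_bridge G e \<and> L > L' \<longrightarrow>
               resist G s t \<ge> resist G' s t \<and>
               (resist G s t = resist G' s t \<longleftrightarrow> jfun H P Q s = jfun H P Q t)"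
  proof (intro impI)
    assume h: "\<not> is_bridge G e \<and> L > L'"
    then have r: "resist G s t = resist G' s t + (L - L') / ((L + R) * (L' + R)) * D\<^sup>2" and Rnn: "R \<ge> 0"
      using NB by auto
    have c: "(L - L') / ((L + R) * (L' + R)) > 0" using h L' Rnn by (intro divide_pos_pos mult_pos_pos) auto
    have "0 \<le> (L - L') / ((L + R) * (L' + R)) * D\<^sup>2" using c by (intro mult_nonneg_nonneg) auto
    then have ge: "resist G s t \<ge> resist G' s t" unfolding r by linarith
    define cc where "cc = (L - L') / ((L + R) * (L' + R))"
    have "resist G s t = resist G' s t \<longleftrightarrow> cc * D\<^sup>2 = 0" unfolding r cc_def by simp
    also have "\<dots> \<longleftrightarrow> D = 0" using c unfolding cc_def[symmetric] by simp
    finally have "resist G s t = resist G' s t \<longleftrightarrow> D = 0" .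
    then show "resist G s t \<ge> resist G' s t \<and> (resist G s t = resist G' s t \<longleftrightarrow> jfun H P Q s = jfun H P Q t)"
      using ge unfolding D_def by simp
  qed
  have part4: "is_bridge G e \<and> L > L' \<longrightarrow>
               resist G s t \<ge> resist G' s t \<and>
               (resist G s t = resist G' s t \<longleftrightarrow> same_component H s t)"
    using BR by auto
  show ?thesis unfolding Let_def
    unfolding P_def[symmetric] Q_def[symmetric] L_def[symmetric] G'_def[symmetric] H_def[symmetric] R_def[symmetric]
    using part1 part2 part3 part4 unfolding D_def by blast
qed

end
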